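(* Let $q$ be a prime power and let $A$ and $B$ be parity check matrices over $\mathbb{F}_q$ of the Hamming codes $[n_a,k_a,3]_q$ and $[n_b,k_b,3]_q$ respectively, where $n_a=(q^{m_a}-1)/(q-1)\ge3$, $n_b=(q^{m_b}-1)/(q-1)\ge3$, $k_a=n_a-m_a$, $k_b=n_b-m_b$. Let $C$ be the linear code over $\mathbb{F}_q$ with parity check matrix $H=A\otimes B$. Then: (1) $C$ has length $n=n_an_b$, dimension $k=n-m_am_b$ and minimum distance $d=3$; (2) the covering radius of $C$ is $\rho=\min\{m_a,m_b\}$; (3) $C$ is completely transitive, and therefore completely regular.
   Context: $A\otimes B$ denotes the Kronecker product (each entry $a_{r,s}$ of $A$ replaced by the block $a_{r,s}B$). The $q$-ary Hamming code with $m$ check symbols has a parity check matrix of size $m\times(q^m-1)/(q-1)$ whose columns are one nonzero representative of each one-dimensional subspace of $\mathbb{F}_q^m$. The covering radius of $C$ is $\max_{{\bf v}\in\mathbb{F}_q^n}\min_{{\bf c}\in C}\mathrm{wt}({\bf v}-{\bf c})$. The automorphism group $\mathrm{Aut}(C)$ consists of all $n\times n$ monomial matrices $M$ over $\mathbb{F}_q$ (exactly one nonzero entry in each row and column) with ${\bf c}M\in C$ for all ${\bf c}\in C$, together with (when $q$ is not prime) the field automorphisms of $\mathbb{F}_q$ preserving $C$ and their compositions; it acts on cosets by $\phi({\bf v}+C)=\phi({\bf v})+C$. A linear code with covering radius $\rho$ is completely transitive if $\mathrm{Aut}(C)$ has exactly $\rho+1$ orbits on the set of cosets of $C$. A code $C$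 is completely regular if for each $l\ge0$ every vector in $C(l)=\{{\bf x}:d({\bf x},C)=l\}$ has the same number $c_l$ of neighbors (vectors at Hamming distance 1) in $C(l-1)$ and the same number $b_l$ of neighbors in $C(l+1)$. *)

theory Defs
  imports Complex_Main "HOL-Library.Function_Algebras"
begin

text \<open>Vectors of length n over a field: functions nat => 'a supported on {..<n}.
  Matrices: functions nat => nat => 'a, with explicit row/column counts.\<close>

definition vecs :: "nat \<Rightarrow> (nat \<Rightarrow> 'a::zero) set" where
  "vecs n = {v. \<forall>i. n \<le> i \<longrightarrow> v i = 0}"

definition scalev :: "'a::field \<Rightarrow> (nat \<Rightarrow> 'a) \<Rightarrow> (nat \<Rightarrow> 'a)" where
  "scalev c v = (\<lambda>i. c * v i)"

definition col :: "nat \<Rightarrow> (nat \<Rightarrow> nat \<Rightarrow> 'a::zero) \<Rightarrow> nat \<Rightarrow> (nat \<Rightarrow> 'a)" where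
  "col m M j = (\<lambda>i. if i < m then M i j else 0)"

text \<open>M (m x N) is a parity check matrix of a q-ary Hamming code with m check symbols:
  its columns are one nonzero representative of each one-dimensional subspace of F^m.\<close>
definition hamming_pcm :: "nat \<Rightarrow> nat \<Rightarrow> (nat \<Rightarrow> nat \<Rightarrow> 'a::field) \<Rightarrow> bool" where
  "hamming_pcm m N M \<longleftrightarrow>
     (\<forall>j<N. col m M j \<noteq> 0) \<and>
     (\<forall>j<N. \<forall>j'<N. j \<noteq> j' \<longrightarrow> (\<forall>c. col m M j \<noteq> scalev c (col m M j'))) \<and>
     (\<forall>v\<in>vecs m. v \<noteq> 0 \<longrightarrow> (\<exists>j<N. \<exists>c. v = scalev c (col m M j)))"

text \<open>Kronecker product of an (ma x na) matrix A with an (mb x nb) matrix B: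
  entry ((r,r'),(s,s')) = a_{r,s} b_{r',s'}, rows indexed r*mb+r', columns s*nb+s'.\<close>
definition kron :: "nat \<Rightarrow> nat \<Rightarrow> (nat \<Rightarrow> nat \<Rightarrow> 'a::times) \<Rightarrow> (nat \<Rightarrow> nat \<Rightarrow> 'a) \<Rightarrow> (nat \<Rightarrow> nat \<Rightarrow> 'a)" where
  "kron mb nb A B = (\<lambda>r s. A (r div mb) (s div nb) * B (r mod mb) (s mod nb))"

definition code_of_pcm :: "nat \<Rightarrow> nat \<Rightarrow> (nat \<Rightarrow> nat \<Rightarrow> 'a::field) \<Rightarrow> (nat \<Rightarrow> 'a) set" where
  "code_of_pcm m n H = {v \<in> vecs n. \<forall>r<m. (\<Sum>s<n. H r s * v s) = 0}"

definition wt :: "(nat \<Rightarrow> 'a::zero) \<Rightarrow> nat" where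
  "wt v = card {i. v i \<noteq> 0}"

definition hdist :: "(nat \<Rightarrow> 'a::ab_group_add) \<Rightarrow> (nat \<Rightarrow> 'a) \<Rightarrow> nat" where
  "hdist x y = wt (x - y)"

definition code_dim :: "(nat \<Rightarrow> 'a::field) set \<Rightarrow> nat" where
  "code_dim C = vector_space.dim scalev C"

definition min_dist :: "(nat \<Rightarrow> 'a::field) set \<Rightarrow> nat" where
  "min_dist C = Min {hdist x y | x y. x \<in> C \<and> y \<in> C \<and> x \<noteq> y}"

definition dist_to_code :: "(nat \<Rightarrow> 'a::field) set \<Rightarrow> (nat \<Rightarrow> 'a) \<Rightarrow> nat" where
  "dist_to_code C x = Min (hdist x ` C)"

definition covering_radius :: "nat \<Rightarrow> (nat \<Rightarrow> 'a::field) set \<Rightarrow> nat" where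
  "covering_radius n C = Max (dist_to_code C ` vecs n)"

definition monomial_mat :: "nat \<Rightarrow> (nat \<Rightarrow> nat \<Rightarrow> 'a::zero) \<Rightarrow> bool" where
  "monomial_mat n M \<longleftrightarrow>
     (\<forall>i<n. \<exists>!j. j < n \<and> M i j \<noteq> 0) \<and> (\<forall>j<n. \<exists>!i. i < n \<and> M i j \<noteq> 0)"

definition vecmat :: "nat \<Rightarrow> (nat \<Rightarrow> nat \<Rightarrow> 'a::comm_ring) \<Rightarrow> (nat \<Rightarrow> 'a) \<Rightarrow> (nat \<Rightarrow> 'a)" where
  "vecmat n M v = (\<lambda>j. if j < n then (\<Sum>i<n. v i * M i j) else 0)"

definition field_aut :: "('a::field \<Rightarrow> 'a) \<Rightarrow> bool" where
  "field_aut \<sigma> \<longleftrightarrow> bij \<sigma> \<and> (\<forall>x y. \<sigma> (x + y) = \<sigma> x + \<sigma> y) \<and> (\<forall>x y. \<sigma> (x * y) = \<sigma> x * \<sigma> y)"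

inductive_set aut_group :: "nat \<Rightarrow> (nat \<Rightarrow> 'a::field) set \<Rightarrow> ((nat \<Rightarrow> 'a) \<Rightarrow> (nat \<Rightarrow> 'a)) set"
  for n :: nat and C :: "(nat \<Rightarrow> 'a) set" where
  mono: "monomial_mat n M \<Longrightarrow> (\<forall>c\<in>C. vecmat n M c \<in> C) \<Longrightarrow> vecmat n M \<in> aut_group n C"
| fieldaut: "field_aut \<sigma> \<Longrightarrow> (\<forall>c\<in>C. (\<lambda>i. \<sigma> (c i)) \<in> C) \<Longrightarrow> (\<lambda>v i. \<sigma> (v i)) \<in> aut_group n C"
| comp: "\<phi> \<in> aut_group n C \<Longrightarrow> \<psi> \<in> aut_group n C \<Longrightarrow> \<phi> \<circ> \<psi> \<in> aut_group n C"

definition coset :: "(nat \<Rightarrow> 'a::ab_group_add) set \<Rightarrow> (nat \<Rightarrow> 'a) \<Rightarrow> (nat \<Rightarrow> 'a) set" where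
  "coset C v = (\<lambda>c. v + c) ` C"

text \<open>Orbits of Aut(C) acting on the cosets of C by phi(v + C) = phi(v) + C.\<close>
definition coset_orbits :: "nat \<Rightarrow> (nat \<Rightarrow> 'a::field) set \<Rightarrow> (nat \<Rightarrow> 'a) set set set" where
  "coset_orbits n C = (\<lambda>v. {coset C (\<phi> v) | \<phi>. \<phi> \<in> aut_group n C}) ` vecs n"

definition completely_transitive :: "nat \<Rightarrow> (nat \<Rightarrow> 'a::field) set \<Rightarrow> bool" where
  "completely_transitive n C \<longleftrightarrow> card (coset_orbits n C) = covering_radius n C + 1"

text \<open>C(l) = vectors at distance l from C. c_l counts neighbours in C(l-1)
  (none when l = 0), b_l neighbours in C(l+1).\<close>
definition completely_regular :: "nat \<Rightarrow> (nat \<Rightarrow> 'a::field) set \<Rightarrow> bool" where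
  "completely_regular n C \<longleftrightarrow>
     (\<forall>l. \<exists>cl bl. \<forall>x\<in>vecs n. dist_to_code C x = l \<longrightarrow>
        card {y\<in>vecs n. hdist x y = 1 \<and> dist_to_code C y + 1 = l} = cl \<and>
        card {y\<in>vecs n. hdist x y = 1 \<and> dist_to_code C y = l + 1} = bl)"

end

theory Submission
  imports Defs "HOL-Library.FuncSet"
begin

interpretation sv: vector_space "scalev :: 'a::field \<Rightarrow> (nat \<Rightarrow> 'a) \<Rightarrow> _"
  by unfold_locales (auto simp: scalev_def fun_eq_iff algebra_simps)
interpretation svp: vector_space_pair "scalev :: 'a::field \<Rightarrow> (nat \<Rightarrow> 'a) \<Rightarrow> _" "scalev :: 'a::field \<Rightarrow> (nat \<Rightarrow> 'a) \<Rightarrow> _" ..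

lemma sum_fun_apply: "(sum f A) x = (\<Sum>a\<in>A. f a x)"
  by (induct A rule: infinite_finite_induct) auto

lemma scalev_apply[simp]: "scalev c v i = c * v i" by (simp add: scalev_def)

definition unitv :: "nat \<Rightarrow> nat \<Rightarrow> 'a::zero_neq_one" where
  "unitv k = (\<lambda>i. if i = k then 1 else 0)"

definition outer :: "(nat \<Rightarrow> 'a::times) \<Rightarrow> (nat \<Rightarrow> 'a) \<Rightarrow> nat \<Rightarrow> nat \<Rightarrow> 'a" where
  "outer x y = (\<lambda>t t'. x t * y t')"

lemma vecs_iff: "v \<in> vecs n \<longleftrightarrow> (\<forall>i. n \<le> i \<longrightarrow> v i = 0)" by (simp add: vecs_def)

lemma vecs_zero[simp]: "0 \<in> vecs n" by (simp add: vecs_def)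
lemma vecs_add[intro]: "v \<in> vecs n \<Longrightarrow> w \<in> vecs n \<Longrightarrow> (v::nat\<Rightarrow>'a::monoid_add) + w \<in> vecs n" by (simp add: vecs_def)
lemma vecs_diff[intro]: "v \<in> vecs n \<Longrightarrow> w \<in> vecs n \<Longrightarrow> (v::nat\<Rightarrow>'a::ab_group_add) - w \<in> vecs n" by (simp add: vecs_def)
lemma vecs_uminus[intro]: "v \<in> vecs n \<Longrightarrow> - (v::nat\<Rightarrow>'a::ab_group_add) \<in> vecs n" by (simp add: vecs_def)
lemma vecs_scale[intro]: "v \<in> vecs n \<Longrightarrow> scalev c v \<in> vecs n" by (simp add: vecs_def)
lemma vecs_unitv[intro]: "k < n \<Longrightarrow> unitv k \<in> vecs n" by (simp add: vecs_def unitv_def)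
lemma vecs_sum[intro]: "(\<And>p. p \<in> Q \<Longrightarrow> f p \<in> vecs n) \<Longrightarrow> sum f Q \<in> vecs n"
  by (induct Q rule: infinite_finite_induct) auto

lemma vecs_subspace: "sv.subspace (vecs n)"
  unfolding sv.subspace_def by auto

lemma vecs_eq_image: "vecs n = (\<lambda>f i. if i < n then f i else 0) ` (PiE {..<n} (\<lambda>_. UNIV))"
proof
  show "vecs n \<subseteq> (\<lambda>f i. if i < n then f i else 0) ` (PiE {..<n} (\<lambda>_. UNIV))"
  proof
    fix v assume v: "v \<in> vecs n"
      have e: "(\<lambda>i. if i < n then restrict v {..<n} i else 0) = v" using v by (auto simp: vecs_def fun_eq_iff)
      have r: "restrict v {..<n} \<in> PiE {..<n} (\<lambda>_. UNIV)" by simp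
      have "(\<lambda>f i. if i < n then f i else 0) (restrict v {..<n}) \<in> (\<lambda>f i. if i < n then f i else 0) ` (PiE {..<n} (\<lambda>_. UNIV))"
        using r by (rule imageI)
      then show "v \<in> (\<lambda>f i. if i < n then f i else 0) ` (PiE {..<n} (\<lambda>_. UNIV))"
        unfolding e .
  qed
next
  show "(\<lambda>f i. if i < n then f i else 0) ` (PiE {..<n} (\<lambda>_. UNIV)) \<subseteq> vecs n" by (simp add: vecs_def image_subset_iff)
qed

lemma vecs_inj: "inj_on (\<lambda>f (i::nat). if i < n then (f i :: 'a::zero) else 0) (PiE {..<n} (\<lambda>_. UNIV))"
proof (rule inj_onI)
  fix f g :: "nat \<Rightarrow> 'a" assume f: "f \<in> PiE {..<n} (\<lambda>_. UNIV)" and g: "g \<in> PiE {..<n} (\<lambda>_. UNIV)"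
    and e: "(\<lambda>i. if i < n then f i else 0) = (\<lambda>i. if i < n then g i else 0)"
  show "f = g"
  proof (rule PiE_ext[OF f g])
    fix i assume "i \<in> {..<n}" then show "f i = g i" using fun_cong[OF e, of i] by auto
  qed
qed

lemma card_vecs: "card (vecs n :: (nat \<Rightarrow> 'a::{zero,finite}) set) = card (UNIV :: 'a set) ^ n"
  unfolding vecs_eq_image by (subst card_image[OF vecs_inj]) (simp add: card_PiE)

lemma finite_vecs[simp,intro]: "finite (vecs n :: (nat \<Rightarrow> 'a::{zero,finite}) set)"
  unfolding vecs_eq_image by (intro finite_imageI finite_PiE) auto

lemma supp_sub: "v \<in> vecs n \<Longrightarrow> {i. v i \<noteq> 0} \<subseteq> {..<n}"
  by (auto simp: vecs_def not_less[symmetric])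

lemma supp_finite: "v \<in> vecs n \<Longrightarrow> finite {i. v i \<noteq> 0}"
  using supp_sub finite_subset by blast

lemma wt_zero[simp]: "wt 0 = 0" by (simp add: wt_def)

lemma wt_eq_0: "v \<in> vecs n \<Longrightarrow> wt v = 0 \<longleftrightarrow> v = 0"
  using supp_finite[of v n] by (auto simp: wt_def fun_eq_iff)

lemma wt_add_le: "v \<in> vecs n \<Longrightarrow> w \<in> vecs n \<Longrightarrow> wt ((v::nat\<Rightarrow>'a::monoid_add) + w) \<le> wt v + wt w"
proof -
  assume v: "v \<in> vecs n" and w: "w \<in> vecs n"
  have "{i. (v + w) i \<noteq> 0} \<subseteq> {i. v i \<noteq> 0} \<union> {i. w i \<noteq> 0}" by auto
  then have "wt (v + w) \<le> card ({i. v i \<noteq> 0} \<union> {i. w i \<noteq> 0})"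
    unfolding wt_def using supp_finite[OF v] supp_finite[OF w] by (intro card_mono) auto
  also have "\<dots> \<le> wt v + wt w" unfolding wt_def by (rule card_Un_le)
  finally show ?thesis .
qed

lemma wt_uminus[simp]: "wt (- (v::nat \<Rightarrow> 'a::ab_group_add)) = wt v" by (simp add: wt_def)

lemma wt_diff_commute: "wt ((v::nat \<Rightarrow> 'a::ab_group_add) - w) = wt (w - v)"
  by (metis minus_diff_eq wt_uminus)

lemma wt_scale: "(c::'a::field) \<noteq> 0 \<Longrightarrow> wt (scalev c v) = wt v" by (simp add: wt_def)

lemma wt_scale_unitv: "wt (scalev c (unitv k) :: nat \<Rightarrow> 'a::field) \<le> 1"
proof -
  have "{i. scalev c (unitv k) i \<noteq> (0::'a)} \<subseteq> {k}" by (auto simp: unitv_def)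
  then show ?thesis unfolding wt_def by (metis card.insert card.empty card_mono finite.emptyI finite.insertI empty_iff One_nat_def)
qed

lemma unitv_inj: "inj (unitv :: nat \<Rightarrow> nat \<Rightarrow> 'a::zero_neq_one)"
  by (rule injI) (metis unitv_def zero_neq_one)

lemma unitv_indep: "sv.independent (unitv ` {..<r} :: (nat \<Rightarrow> 'a::field) set)"
proof (rule sv.independent_if_scalars_zero)
  fix f :: "(nat\<Rightarrow>'a) \<Rightarrow> 'a" and x :: "nat\<Rightarrow>'a" assume s: "(\<Sum>x\<in>unitv ` {..<r}. scalev (f x) x) = (0::nat\<Rightarrow>'a)" and x: "x \<in> unitv ` {..<r}"
  then obtain k where k: "k < r" "x = unitv k" by auto
  have "(\<Sum>j\<in>{..<r}. scalev (f (unitv j)) (unitv j)) = (0::nat\<Rightarrow>'a)"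
    using s by (simp add: sum.reindex[OF inj_on_subset[OF unitv_inj]])
  then have "(\<Sum>j\<in>{..<r}. scalev (f (unitv j)) (unitv j)) k = (0::'a)" by simp
  then have "(\<Sum>j\<in>{..<r}. f (unitv j) * (if k = j then 1 else 0)) = (0::'a)"
    by (simp add: sum_fun_apply unitv_def)
  then show "f x = 0" using k by (simp add: if_distrib sum.delta cong: if_cong)
qed simp

locale kr =
  fixes A B :: "nat \<Rightarrow> nat \<Rightarrow> 'a::{field,finite}" and ma mb na nb :: nat
  assumes hA: "hamming_pcm ma na A" and hB: "hamming_pcm mb nb B"
    and na3: "na \<ge> 3" and nb3: "nb \<ge> 3"
begin

abbreviation N where "N \<equiv> na * nb"
definition a where "a s = col ma A s"
definition b where "b s = col mb B s"
definition S :: "(nat \<Rightarrow> 'a) \<Rightarrow> nat \<Rightarrow> nat \<Rightarrow> 'a" where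
  "S v = (\<lambda>t t'. \<Sum>i<N. v i * a (i div nb) t * b (i mod nb) t')"
abbreviation Cd where "Cd \<equiv> code_of_pcm (ma*mb) N (kron mb nb A B)"

lemma nb_pos: "0 < nb" using nb3 by simp
lemma na_pos: "0 < na" using na3 by simp

lemma a_vecs[intro]: "a s \<in> vecs ma" by (simp add: a_def col_def vecs_def)
lemma b_vecs[intro]: "b s \<in> vecs mb" by (simp add: b_def col_def vecs_def)
lemma a_out: "ma \<le> t \<Longrightarrow> a s t = 0" by (simp add: a_def col_def)
lemma b_out: "mb \<le> t \<Longrightarrow> b s t = 0" by (simp add: b_def col_def)
lemma a_nz: "s < na \<Longrightarrow> a s \<noteq> 0" using hA by (simp add: hamming_pcm_def a_def)
lemma b_nz: "s < nb \<Longrightarrow> b s \<noteq> 0" using hB by (simp add: hamming_pcm_def b_def)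
lemma a_np: "s < na \<Longrightarrow> u < na \<Longrightarrow> s \<noteq> u \<Longrightarrow> a s \<noteq> scalev c (a u)"
  using hA unfolding hamming_pcm_def a_def by blast
lemma b_np: "s < nb \<Longrightarrow> u < nb \<Longrightarrow> s \<noteq> u \<Longrightarrow> b s \<noteq> scalev c (b u)"
  using hB unfolding hamming_pcm_def b_def by blast
lemma a_cover: "x \<in> vecs ma \<Longrightarrow> x \<noteq> 0 \<Longrightarrow> \<exists>j<na. \<exists>c. x = scalev c (a j)"
  using hA unfolding hamming_pcm_def a_def by blast
lemma b_cover: "x \<in> vecs mb \<Longrightarrow> x \<noteq> 0 \<Longrightarrow> \<exists>j<nb. \<exists>c. x = scalev c (b j)"
  using hB unfolding hamming_pcm_def b_def by blast

lemma a_ex: "s < na \<Longrightarrow> \<exists>t. a s t \<noteq> 0" using a_nz by (auto simp: fun_eq_iff)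
lemma b_ex: "s < nb \<Longrightarrow> \<exists>t. b s t \<noteq> 0" using b_nz by (auto simp: fun_eq_iff)

lemma a_np2:
  assumes "s < na" "u < na" "s \<noteq> u" "\<And>t. \<alpha> * a s t + \<beta> * a u t = 0"
  shows "\<alpha> = 0 \<and> \<beta> = 0"
proof (cases "\<beta> = 0")
  case True
  obtain t where "a s t \<noteq> 0" using a_ex[OF assms(1)] by blast
  then show ?thesis using assms(4)[of t] True by simp
next
  case False
  have "a u = scalev (- \<alpha> / \<beta>) (a s)"
  proof
    fix t show "a u t = scalev (- \<alpha> / \<beta>) (a s) t"
      using assms(4)[of t] False by (simp add: field_simps) (metis add.commute add_eq_0_iff minus_mult_left mult.commute)
  qed
  then show ?thesis using a_np[OF assms(2,1)] assms(3) by metis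
qed

lemma b_np2:
  assumes "s < nb" "u < nb" "s \<noteq> u" "\<And>t. \<alpha> * b s t + \<beta> * b u t = 0"
  shows "\<alpha> = 0 \<and> \<beta> = 0"
proof (cases "\<beta> = 0")
  case True
  obtain t where "b s t \<noteq> 0" using b_ex[OF assms(1)] by blast
  then show ?thesis using assms(4)[of t] True by simp
next
  case False
  have "b u = scalev (- \<alpha> / \<beta>) (b s)"
  proof
    fix t show "b u t = scalev (- \<alpha> / \<beta>) (b s) t"
      using assms(4)[of t] False by (simp add: field_simps) (metis add.commute add_eq_0_iff minus_mult_left mult.commute)
  qed
  then show ?thesis using b_np[OF assms(2,1)] assms(3) by metis
qed

lemma S_out1: "ma \<le> t \<Longrightarrow> S v t t' = 0" by (simp add: S_def a_out)
lemma S_out2: "mb \<le> t' \<Longrightarrow> S v t t' = 0" by (simp add: S_def b_out)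
lemma S_add: "S (v + w) = S v + S w" by (simp add: S_def fun_eq_iff sum.distrib algebra_simps)
lemma S_diff: "S (v - w) = S v - S w" by (simp add: S_def fun_eq_iff sum_subtractf algebra_simps)
lemma S_zero[simp]: "S 0 = 0" by (simp add: S_def fun_eq_iff)
lemma S_zero'[simp]: "S (\<lambda>a. 0) = (\<lambda>a b. 0)" by (simp add: S_def fun_eq_iff)
lemma wt_zero'[simp]: "wt (\<lambda>a. 0::'a) = 0" by (simp add: wt_def)
lemma S_sum: "S (sum f Q) = (\<Sum>p\<in>Q. S (f p))"
proof (induct Q rule: infinite_finite_induct)
  case (insert x F) then show ?case by (simp only: sum.insert[OF insert(1,2)] S_add)
qed (simp_all add: zero_fun_def)
lemma S_unit: "k < N \<Longrightarrow> S (scalev c (unitv k)) = outer (scalev c (a (k div nb))) (b (k mod nb))"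
proof -
  assume k: "k < N"
  have "(\<Sum>i<N. scalev c (unitv k) i * a (i div nb) t * b (i mod nb) t') =
     (\<Sum>i<N. if i = k then c * a (k div nb) t * b (k mod nb) t' else 0)" for t t'
    by (rule sum.cong) (auto simp: unitv_def)
  then show ?thesis using k by (simp add: S_def outer_def fun_eq_iff)
qed

lemma S_supp: assumes "w \<in> vecs N"
  shows "S w t t' = (\<Sum>i\<in>{i. w i \<noteq> 0}. w i * a (i div nb) t * b (i mod nb) t')"
  unfolding S_def using supp_sub[OF assms]
  by (intro sum.mono_neutral_right) auto

lemma kron_S:
  assumes r: "r < ma*mb"
  shows "(\<Sum>s<N. kron mb nb A B r s * v s) = S v (r div mb) (r mod mb)"
proof -
  have mb: "0 < mb" using r by (cases mb) auto
  have "r div mb < ma" using r by (simp add: less_mult_imp_div_less)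
  moreover have "r mod mb < mb" using mb by simp
  ultimately show ?thesis
    by (simp add: kron_def S_def a_def b_def col_def algebra_simps)
qed

lemma C_eq: "Cd = {v \<in> vecs N. S v = 0}"
proof -
  have "(\<forall>r<ma*mb. (\<Sum>s<N. kron mb nb A B r s * v s) = 0) \<longleftrightarrow> S v = 0" for v
  proof
    assume h: "\<forall>r<ma*mb. (\<Sum>s<N. kron mb nb A B r s * v s) = 0"
    show "S v = 0"
    proof (intro ext)
      fix t t' show "S v t t' = 0 t t'"
      proof (cases "t < ma \<and> t' < mb")
        case True
        then have r: "t*mb+t' < ma*mb"
          by (metis add.commute add_less_cancel_left le_less_trans less_imp_le_nat mult.commute
              mult_le_mono1 nat_mult_less_cancel_disj not_less Suc_leI mult_Suc)
        have "(t*mb+t') div mb = t" "(t*mb+t') mod mb = t'" using True by auto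
        then show ?thesis using h[rule_format, OF r] kron_S[OF r, of v] by simp
      next
        case False then show ?thesis by (auto simp: S_out1 S_out2 not_less)
      qed
    qed
  qed (simp add: kron_S)
  then show ?thesis by (auto simp: code_of_pcm_def)
qed

lemma C_sub: "Cd \<subseteq> vecs N" by (auto simp: C_eq)
lemma C_zero[simp]: "0 \<in> Cd" by (simp add: C_eq)
lemma C_add: "x \<in> Cd \<Longrightarrow> y \<in> Cd \<Longrightarrow> x + y \<in> Cd" by (auto simp: C_eq S_add)
lemma C_diff: "x \<in> Cd \<Longrightarrow> y \<in> Cd \<Longrightarrow> x - y \<in> Cd" by (auto simp: C_eq S_diff)
lemma C_finite: "finite Cd" using C_sub finite_subset finite_vecs by blast
lemma C_diffI: "x \<in> vecs N \<Longrightarrow> y \<in> vecs N \<Longrightarrow> S x = S y \<Longrightarrow> x - y \<in> Cd"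
  by (auto simp: C_eq S_diff)

lemma R1:
  assumes x: "x \<in> vecs ma" and y: "y \<in> vecs mb"
  shows "\<exists>w\<in>vecs N. wt w \<le> 1 \<and> S w = outer x y"
proof (cases "x = 0 \<or> y = 0")
  case True
  then have "outer x y = 0" by (auto simp: outer_def fun_eq_iff)
  then show ?thesis by (intro bexI[of _ 0]) auto
next
  case False
  obtain s c where s: "s < na" "x = scalev c (a s)" using a_cover[OF x] False by blast
  obtain s' d where s': "s' < nb" "y = scalev d (b s')" using b_cover[OF y] False by blast
  define k where "k = s*nb+s'"
  have kN: "k < N"
  proof -
    have "k < (s+1)*nb" using s'(1) by (simp add: k_def)
    also have "\<dots> \<le> na*nb" using s(1) by (intro mult_le_mono1) simp
    finally show ?thesis .
  qed
  have kd: "k div nb = s" "k mod nb = s'" using s'(1) by (auto simp: k_def)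
  have "S (scalev (c*d) (unitv k)) = outer x y"
    unfolding S_unit[OF kN] kd s s' by (simp add: outer_def fun_eq_iff algebra_simps)
  then show ?thesis using kN wt_scale_unitv by (intro bexI[of _ "scalev (c*d) (unitv k)"]) auto
qed

lemma SumR1:
  assumes "finite Q"
  shows "(\<forall>p\<in>Q. x p \<in> vecs ma \<and> y p \<in> vecs mb) \<Longrightarrow>
    \<exists>w\<in>vecs N. wt w \<le> card Q \<and> S w = (\<Sum>p\<in>Q. outer (x p) (y p))"
  using assms
proof (induct Q rule: finite_induct)
  case empty then show ?case by (intro bexI[of _ 0]) auto
next
  case (insert q Q)
  obtain w where w: "w \<in> vecs N" "wt w \<le> card Q" "S w = (\<Sum>p\<in>Q. outer (x p) (y p))"
    using insert by auto
  obtain w1 where w1: "w1 \<in> vecs N" "wt w1 \<le> 1" "S w1 = outer (x q) (y q)"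
    using R1[of "x q" "y q"] insert.prems by auto
  have "wt (w1 + w) \<le> card (insert q Q)"
    using wt_add_le[OF w1(1) w(1)] w1(2) w(2) insert(1,2) by simp
  moreover have "S (w1 + w) = (\<Sum>p\<in>insert q Q. outer (x p) (y p))"
    using insert(1,2) by (simp add: S_add w1 w)
  moreover have "w1 + w \<in> vecs N" using w1(1) w(1) by (rule vecs_add)
  ultimately show ?case by blast
qed

lemma LB:
  assumes w: "w \<in> vecs N" and col: "\<And>t'. t' < r \<Longrightarrow> (\<lambda>t. S w t t') = unitv t'"
  shows "r \<le> wt w"
proof -
  define P where "P = {i. w i \<noteq> 0}"
  have fP: "finite P" using supp_finite[OF w] by (simp add: P_def)
  define T where "T = (\<lambda>i. a (i div nb)) ` P"
  have fT: "finite T" using fP by (simp add: T_def)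
  have sub: "unitv ` {..<r} \<subseteq> sv.span T"
  proof
    fix u :: "nat \<Rightarrow> 'a" assume "u \<in> unitv ` {..<r}"
    then obtain t' where t': "t' < r" "u = unitv t'" by auto
    have "u = (\<Sum>i\<in>P. scalev (w i * b (i mod nb) t') (a (i div nb)))"
      unfolding t'(2) col[OF t'(1), symmetric]
      by (simp add: fun_eq_iff sum_fun_apply S_supp[OF w] P_def algebra_simps)
    also have "\<dots> \<in> sv.span T"
      by (intro sv.span_sum sv.span_scale sv.span_base) (auto simp: T_def)
    finally show "u \<in> sv.span T" .
  qed
  have "card (unitv ` {..<r} :: (nat \<Rightarrow> 'a) set) \<le> card T"
    using sv.independent_span_bound[OF fT unitv_indep sub] by simp
  moreover have "card (unitv ` {..<r} :: (nat \<Rightarrow> 'a) set) = r"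
    by (subst card_image) (auto intro: inj_on_subset[OF unitv_inj])
  moreover have "card T \<le> wt w" unfolding T_def wt_def P_def by (rule card_image_le) (simp add: supp_finite[OF w])
  ultimately show ?thesis by simp
qed

end

declare scalev_apply[simp del]

lemma delta_sum1: "(\<Sum>k<(m::nat). (if t = k then 1 else 0) * (f k::'a::field)) = (if t < m then f t else 0)"
proof -
  have "(\<Sum>k<m. (if t = k then 1 else 0) * f k) = (\<Sum>k<m. if t = k then f k else 0)"
    by (rule sum.cong) auto
  then show ?thesis by (simp add: sum.delta')
qed

lemma delta_sum2: "(\<Sum>k<(m::nat). (f k::'a::field) * (if t = k then 1 else 0)) = (if t < m then f t else 0)"
  using delta_sum1[where m=m and t=t and f=f] by (simp add: mult.commute)

lemma card_span:
  fixes B :: "(nat \<Rightarrow> 'a::{field,finite}) set"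
  assumes "finite B"
  shows "sv.independent B \<Longrightarrow> card (sv.span B) = card (UNIV::'a set) ^ card B"
  using assms
proof (induct B rule: finite_induct)
  case empty then show ?case by simp
next
  case (insert x F)
  have iF: "sv.independent F" and xF: "x \<notin> sv.span F"
    using insert(2,4) by (auto simp: sv.independent_insert)
  have eq: "sv.span (insert x F) = (\<lambda>(y,k). y + scalev k x) ` (sv.span F \<times> UNIV)"
  proof
    show "sv.span (insert x F) \<subseteq> (\<lambda>(y,k). y + scalev k x) ` (sv.span F \<times> UNIV)"
    proof
      fix z assume "z \<in> sv.span (insert x F)"
      then obtain k where k: "z - scalev k x \<in> sv.span F" by (auto simp: sv.span_insert)
      have "z = (\<lambda>(y,k). y + scalev k x) (z - scalev k x, k)" by simp
      then show "z \<in> (\<lambda>(y,k). y + scalev k x) ` (sv.span F \<times> UNIV)" using k by blast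
    qed
  next
    show "(\<lambda>(y,k). y + scalev k x) ` (sv.span F \<times> UNIV) \<subseteq> sv.span (insert x F)"
    proof clarify
      fix y k assume yF: "y \<in> sv.span F"
      show "y + scalev k x \<in> sv.span (insert x F)"
        unfolding sv.span_insert by (intro CollectI exI[of _ k]) (simp add: yF)
    qed
  qed
  have inj: "inj_on (\<lambda>(y,k). y + scalev k x) (sv.span F \<times> UNIV)"
  proof (rule inj_onI, clarify)
    fix y k y' k' assume y: "y \<in> sv.span F" and y': "y' \<in> sv.span F"
      and e: "y + scalev k x = y' + scalev k' x"
    have "scalev (k - k') x = y' - y" using e
      by (simp add: fun_eq_iff algebra_simps)
    then have sp: "scalev (k - k') x \<in> sv.span F" using y y' by (simp add: sv.span_diff)
    have "k = k'"
    proof (rule ccontr)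
      assume "k \<noteq> k'"
      then have "scalev (inverse (k - k')) (scalev (k - k') x) = x" by (simp add: sv.scale_scale)
      then have "x \<in> sv.span F" using sv.span_scale[OF sp, of "inverse (k - k')"] by simp
      then show False using xF by simp
    qed
    then show "y = y' \<and> k = k'" using e by simp
  qed
  have "card (sv.span (insert x F)) = card (sv.span F \<times> (UNIV::'a set))"
    unfolding eq by (rule card_image[OF inj])
  also have "\<dots> = card (sv.span F) * card (UNIV::'a set)" by (simp add: card_cartesian_product)
  finally show ?case using insert(1,2) insert(3)[OF iF] by simp
qed

lemma card_field_ge2: "2 \<le> card (UNIV::'a::{field,finite} set)"
proof -
  have "card {0::'a, 1} = 2" by simp
  moreover have "card {0::'a, 1} \<le> card (UNIV::'a set)" by (rule card_mono) auto
  ultimately show ?thesis by simp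
qed

context kr begin

definition dc where "dc x = dist_to_code Cd x"

lemma dist_le: "c \<in> Cd \<Longrightarrow> dc x \<le> hdist x c"
  unfolding dc_def dist_to_code_def using C_finite by (intro Min_le) auto

lemma dist_ex: "\<exists>c\<in>Cd. dc x = hdist x c"
proof -
  have ne: "hdist x ` Cd \<noteq> {}" using C_zero by blast
  have "Min (hdist x ` Cd) \<in> hdist x ` Cd" using C_finite ne by (intro Min_in) auto
  then show ?thesis unfolding dc_def dist_to_code_def by auto
qed

lemma dist_le_wt:
  assumes v: "v \<in> vecs N" and w: "w \<in> vecs N" and e: "S w = S v"
  shows "dc v \<le> wt w"
proof -
  have "v - w \<in> Cd" using C_diffI[OF v w] e by simp
  then have "dc v \<le> hdist v (v - w)" by (rule dist_le)
  then show ?thesis by (simp add: hdist_def)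
qed

lemma dist_rep:
  assumes v: "v \<in> vecs N"
  shows "\<exists>w\<in>vecs N. S w = S v \<and> wt w = dc v"
proof -
  obtain c where c: "c \<in> Cd" "dc v = hdist v c" using dist_ex by blast
  have cv: "c \<in> vecs N" using c(1) C_sub by blast
  have "S c = 0" using c(1) by (simp add: C_eq)
  then have "S (v - c) = S v" by (simp add: S_diff)
  moreover have "v - c \<in> vecs N" using v cv by blast
  ultimately show ?thesis using c(2) by (auto simp: hdist_def)
qed

lemma dist_ge:
  assumes v: "v \<in> vecs N" and h: "\<And>w. w \<in> vecs N \<Longrightarrow> S w = S v \<Longrightarrow> r \<le> wt w"
  shows "r \<le> dc v"
  using dist_rep[OF v] h by metis

lemma dist_shift:
  assumes c: "c \<in> Cd"
  shows "dc (x + c) = dc x"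
proof -
  have "hdist (x + c) ` Cd = hdist x ` Cd"
  proof
    show "hdist (x + c) ` Cd \<subseteq> hdist x ` Cd"
    proof
      fix z assume "z \<in> hdist (x + c) ` Cd"
      then obtain c' where c': "c' \<in> Cd" "z = hdist (x + c) c'" by auto
      have "z = hdist x (c' - c)" using c' by (simp add: hdist_def algebra_simps)
      moreover have "c' - c \<in> Cd" using C_diff c c' by blast
      ultimately show "z \<in> hdist x ` Cd" by blast
    qed
  next
    show "hdist x ` Cd \<subseteq> hdist (x + c) ` Cd"
    proof
      fix z assume "z \<in> hdist x ` Cd"
      then obtain c' where c': "c' \<in> Cd" "z = hdist x c'" by auto
      have "z = hdist (x + c) (c' + c)" using c' by (simp add: hdist_def algebra_simps)
      moreover have "c' + c \<in> Cd" using C_add c c' by blast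
      ultimately show "z \<in> hdist (x + c) ` Cd" by blast
    qed
  qed
  then show ?thesis by (simp add: dc_def dist_to_code_def)
qed

definition mat_ok :: "(nat \<Rightarrow> nat \<Rightarrow> 'a) \<Rightarrow> bool" where
  "mat_ok T \<longleftrightarrow> (\<forall>t t'. (ma \<le> t \<or> mb \<le> t') \<longrightarrow> T t t' = 0)"

lemma S_ok: "mat_ok (S v)" by (auto simp: mat_ok_def S_out1 S_out2)

lemma T_rows: "mat_ok T \<Longrightarrow> T = (\<Sum>t<ma. outer (unitv t) (\<lambda>t'. T t t'))"
  by (auto simp: fun_eq_iff sum_fun_apply outer_def unitv_def mat_ok_def delta_sum1 not_less)

lemma T_cols: "mat_ok T \<Longrightarrow> T = (\<Sum>t'<mb. outer (\<lambda>t. T t t') (unitv t'))"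
  by (auto simp: fun_eq_iff sum_fun_apply outer_def unitv_def mat_ok_def delta_sum2 not_less)

lemma cover:
  assumes T: "mat_ok T"
  shows "\<exists>w\<in>vecs N. wt w \<le> min ma mb \<and> S w = T"
proof -
  obtain w1 where w1: "w1 \<in> vecs N" "wt w1 \<le> card {..<ma}"
      "S w1 = (\<Sum>t<ma. outer (unitv t) (\<lambda>t'. T t t'))"
    using SumR1[of "{..<ma}" unitv "\<lambda>t t'. T t t'"] T
    by (auto simp: vecs_iff mat_ok_def unitv_def)
  obtain w2 where w2: "w2 \<in> vecs N" "wt w2 \<le> card {..<mb}"
      "S w2 = (\<Sum>t'<mb. outer (\<lambda>t. T t t') (unitv t'))"
    using SumR1[of "{..<mb}" "\<lambda>t' t. T t t'" unitv] T
    by (auto simp: vecs_iff mat_ok_def unitv_def)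
  show ?thesis
  proof (cases "ma \<le> mb")
    case True then show ?thesis using w1 T_rows[OF T] by (intro bexI[of _ w1]) auto
  next
    case False then show ?thesis using w2 T_cols[OF T] by (intro bexI[of _ w2]) auto
  qed
qed

lemma cov_le: "v \<in> vecs N \<Longrightarrow> dc v \<le> min ma mb"
  using cover[OF S_ok[of v]] dist_le_wt by (meson order_trans)

definition Dr :: "nat \<Rightarrow> nat \<Rightarrow> nat \<Rightarrow> 'a" where
  "Dr r = (\<lambda>t t'. if t = t' \<and> t < r then 1 else 0)"

lemma Dr_sum: "Dr r = (\<Sum>t<r. outer (unitv t) (unitv t))"
  by (auto simp: fun_eq_iff sum_fun_apply outer_def unitv_def Dr_def delta_sum1)

lemma dist_exact:
  assumes r: "r \<le> min ma mb"
  shows "\<exists>v\<in>vecs N. dc v = r"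
proof -
  have "\<forall>p\<in>{..<r}. unitv p \<in> vecs ma \<and> unitv p \<in> vecs mb" using r by (auto intro: vecs_unitv)
  then obtain w where w: "w \<in> vecs N" "wt w \<le> card {..<r}" "S w = (\<Sum>t<r. outer (unitv t) (unitv t))"
    using SumR1[of "{..<r}" unitv unitv] by auto
  have Sw: "S w = Dr r" using w(3) Dr_sum by simp
  have "dc w \<le> r" using dist_le[OF C_zero, of w] w(2) by (simp add: hdist_def)
  moreover have "r \<le> dc w"
  proof (rule dist_ge[OF w(1)])
    fix w' assume w': "w' \<in> vecs N" "S w' = S w"
    show "r \<le> wt w'"
    proof (rule LB[OF w'(1)])
      fix t' assume "t' < r" then show "(\<lambda>t. S w' t t') = unitv t'"
        using w'(2) Sw by (auto simp: Dr_def unitv_def fun_eq_iff)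
    qed
  qed
  ultimately show ?thesis using w(1) by (intro bexI[of _ w]) auto
qed

lemma covering: "covering_radius N Cd = min ma mb"
  unfolding covering_radius_def dc_def[abs_def, symmetric]
proof (rule Max_eqI)
  show "finite (dc ` vecs N)" by simp
  show "\<And>y. y \<in> dc ` vecs N \<Longrightarrow> y \<le> min ma mb" using cov_le by auto
  obtain v where "v \<in> vecs N" "dc v = min ma mb" using dist_exact[of "min ma mb"] by auto
  then show "min ma mb \<in> dc ` vecs N" by (metis imageI)
qed

end

context kr begin

lemma idx_dm: "p < N \<Longrightarrow> p div nb < na \<and> p mod nb < nb"
  using nb_pos by (simp add: less_mult_imp_div_less)

lemma wt_ge3:
  assumes c: "c \<in> Cd" and nz: "c \<noteq> 0"
  shows "3 \<le> wt c"
proof (rule ccontr)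
  assume "\<not> 3 \<le> wt c"
  then have le2: "wt c \<le> 2" by simp
  have cv: "c \<in> vecs N" using c C_sub by blast
  define P where "P = {i. c i \<noteq> 0}"
  have fP: "finite P" using supp_finite[OF cv] by (simp add: P_def)
  have PN: "\<And>p. p \<in> P \<Longrightarrow> p < N" using supp_sub[OF cv] by (auto simp: P_def)
  have cP: "\<And>p. p \<in> P \<Longrightarrow> c p \<noteq> 0" by (simp add: P_def)
  have ne: "wt c \<noteq> 0" using wt_eq_0[OF cv] nz by simp
  have Sc: "\<And>t t'. (\<Sum>i\<in>P. c i * a (i div nb) t * b (i mod nb) t') = 0"
  proof -
    fix t t'
    have "S c t t' = 0" using c by (simp add: C_eq)
    then show "(\<Sum>i\<in>P. c i * a (i div nb) t * b (i mod nb) t') = 0"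
      using S_supp[OF cv, of t t'] by (simp add: P_def)
  qed
  have "card P = 1 \<or> card P = 2" using le2 ne by (simp add: wt_def P_def[symmetric]) linarith
  then show False
  proof
    assume "card P = 1"
    then obtain p where P: "P = {p}" by (auto simp: card_1_singleton_iff)
    have p: "p < N" "c p \<noteq> 0" using PN cP P by auto
    obtain t where t: "a (p div nb) t \<noteq> 0" using a_ex idx_dm[OF p(1)] by blast
    obtain t' where t': "b (p mod nb) t' \<noteq> 0" using b_ex idx_dm[OF p(1)] by blast
    show False using Sc[of t t'] t t' p(2) by (simp add: P)
  next
    assume "card P = 2"
    then obtain p p' where P: "P = {p, p'}" and pp: "p \<noteq> p'" by (auto simp: card_2_iff)
    have p: "p < N" "c p \<noteq> 0" "p' < N" "c p' \<noteq> 0" using PN cP P by auto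
    have S2: "\<And>t t'. c p * a (p div nb) t * b (p mod nb) t' + c p' * a (p' div nb) t * b (p' mod nb) t' = 0"
      using Sc pp by (simp add: P)
    show False
    proof (cases "p div nb = p' div nb")
      case False
      obtain t' where t': "b (p mod nb) t' \<noteq> 0" using b_ex idx_dm[OF p(1)] by blast
      have "c p * b (p mod nb) t' = 0 \<and> c p' * b (p' mod nb) t' = 0"
      proof (rule a_np2[OF conjunct1[OF idx_dm[OF p(1)]] conjunct1[OF idx_dm[OF p(3)]] False])
        fix t show "c p * b (p mod nb) t' * a (p div nb) t + c p' * b (p' mod nb) t' * a (p' div nb) t = 0"
          using S2[of t t'] by (simp add: mult_ac)
      qed
      then show False using t' p(2) by simp
    next
      case True
      have "p mod nb \<noteq> p' mod nb"
      proof
        assume "p mod nb = p' mod nb"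
        then have "p div nb * nb + p mod nb = p' div nb * nb + p' mod nb" using True by simp
        then have "p = p'" by simp
        then show False using pp by simp
      qed
      obtain t where t: "a (p div nb) t \<noteq> 0" using a_ex idx_dm[OF p(1)] by blast
      have "c p * a (p div nb) t = 0 \<and> c p' * a (p div nb) t = 0"
      proof (rule b_np2[OF conjunct2[OF idx_dm[OF p(1)]] conjunct2[OF idx_dm[OF p(3)]] \<open>p mod nb \<noteq> p' mod nb\<close>])
        fix t' show "c p * a (p div nb) t * b (p mod nb) t' + c p' * a (p div nb) t * b (p' mod nb) t' = 0"
          using S2[of t t'] True by (simp add: mult_ac)
      qed
      then show False using t p(2) by simp
    qed
  qed
qed

lemma w3: "\<exists>w\<in>Cd. wt w = 3"
proof -
  have n01: "0 < na" "1 < na" using na3 by auto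
  define x where "x = a 0 + a 1"
  have xv: "x \<in> vecs ma" by (auto simp: x_def)
  have "x \<noteq> 0"
  proof
    assume "x = 0"
    then have "\<And>t. 1 * a 0 t + 1 * a 1 t = 0" by (metis mult_1 plus_fun_apply x_def zero_fun_apply)
    then show False using a_np2[OF n01 zero_neq_one, of 1 1] by simp
  qed
  then obtain j c where j: "j < na" "x = scalev c (a j)" using a_cover[OF xv] by blast
  have c0: "c \<noteq> 0" using j(2) \<open>x \<noteq> 0\<close> by (auto simp: fun_eq_iff scalev_apply)
  have xt: "\<And>t. a 0 t + a 1 t = c * a j t" using j(2) by (metis plus_fun_apply scalev_apply x_def)
  have j0: "j \<noteq> 0"
  proof
    assume "j = 0"
    then have "\<And>t. (1 - c) * a 0 t + 1 * a 1 t = 0" using xt by (simp add: algebra_simps)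
    then show False using a_np2[OF n01 zero_neq_one, of "1 - c" 1] by simp
  qed
  have j1: "j \<noteq> 1"
  proof
    assume "j = 1"
    then have "\<And>t. 1 * a 0 t + (1 - c) * a 1 t = 0" using xt by (simp add: algebra_simps)
    then show False using a_np2[OF n01 zero_neq_one, of 1 "1 - c"] by simp
  qed
  define w :: "nat \<Rightarrow> 'a" where "w = unitv 0 + unitv nb - scalev c (unitv (j*nb))"
  have pos: "0 < N" "nb < N" "j * nb < N"
    using nb_pos n01 j(1) by simp_all
  have jnb: "j * nb \<noteq> 0" "j * nb \<noteq> nb" using j0 j1 nb_pos by auto
  have wv: "w \<in> vecs N" unfolding w_def using pos by (intro vecs_diff vecs_add vecs_scale vecs_unitv)
  have Sw0: "S w t t' = 0" for t t'
  proof -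
    have "S w t t' = a 0 t * b 0 t' + a 1 t * b 0 t' - c * a j t * b 0 t'"
    proof -
      have e1: "unitv 0 = scalev 1 (unitv 0)" "unitv nb = scalev 1 (unitv nb)"
        by (auto simp: fun_eq_iff scalev_apply)
      show ?thesis unfolding w_def S_diff S_add
        apply (subst (1) e1(1), subst (1) e1(2))
        unfolding S_unit[OF pos(1)] S_unit[OF pos(2)] S_unit[OF pos(3)]
        using nb_pos by (simp add: outer_def scalev_apply)
    qed
    also have "\<dots> = (a 0 t + a 1 t - c * a j t) * b 0 t'" by (simp add: algebra_simps)
    finally show ?thesis using xt by simp
  qed
  have "S w = 0" using Sw0 by (intro ext) simp
  then have wC: "w \<in> Cd" using wv by (simp add: C_eq)
  have wi: "\<And>i. w i = (if i = 0 then 1 else 0) + (if i = nb then 1 else 0) - c * (if i = j*nb then 1 else 0)"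
    by (simp add: w_def unitv_def scalev_apply)
  have "{i. w i \<noteq> 0} = {0, nb, j*nb}"
  proof (intro set_eqI)
    fix i show "i \<in> {i. w i \<noteq> 0} \<longleftrightarrow> i \<in> {0, nb, j*nb}"
      by (cases "i = 0"; cases "i = nb"; cases "i = j*nb") (use nb_pos jnb c0 in \<open>auto simp: wi\<close>)
  qed
  then have "wt w = 3" using nb_pos jnb by (simp add: wt_def)
  then show ?thesis using wC by blast
qed

lemma mindist: "min_dist Cd = 3"
  unfolding min_dist_def
proof (rule Min_eqI)
  have "{hdist x y |x y. x \<in> Cd \<and> y \<in> Cd \<and> x \<noteq> y} \<subseteq> (\<lambda>(x,y). hdist x y) ` (Cd \<times> Cd)" by auto
  then show "finite {hdist x y |x y. x \<in> Cd \<and> y \<in> Cd \<and> x \<noteq> y}"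
    using C_finite by (meson finite_SigmaI finite_imageI finite_subset)
next
  fix z assume "z \<in> {hdist x y |x y. x \<in> Cd \<and> y \<in> Cd \<and> x \<noteq> y}"
  then obtain x y where xy: "x \<in> Cd" "y \<in> Cd" "x \<noteq> y" "z = hdist x y" by auto
  show "3 \<le> z" using wt_ge3[OF C_diff[OF xy(1,2)]] xy(3,4) by (simp add: hdist_def)
next
  obtain w where w: "w \<in> Cd" "wt w = 3" using w3 by blast
  then have "w \<noteq> 0" by auto
  then show "3 \<in> {hdist x y |x y. x \<in> Cd \<and> y \<in> Cd \<and> x \<noteq> y}"
    using w by (intro CollectI exI[of _ w] exI[of _ 0]) (simp add: hdist_def)
qed

end

context kr begin

lemma S_scale: "S (scalev k v) = (\<lambda>t t'. k * S v t t')"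
  by (simp add: S_def scalev_apply fun_eq_iff sum_distrib_left algebra_simps)

lemma C_subspace: "sv.subspace Cd"
  unfolding sv.subspace_def
proof (intro conjI ballI allI)
  show "0 \<in> Cd" by simp
next
  fix x c assume "x \<in> Cd" then show "scalev c x \<in> Cd"
    by (auto simp: C_eq S_scale fun_eq_iff)
next
  fix x y assume "x \<in> Cd" "y \<in> Cd" then show "x + y \<in> Cd" by (rule C_add)
qed

lemma idx_mm:
  assumes "t < ma" "t' < mb"
  shows "t*mb+t' < ma*mb \<and> (t*mb+t') div mb = t \<and> (t*mb+t') mod mb = t'"
proof -
  have "t*mb + t' < t*mb + mb" using assms by simp
  also have "\<dots> = Suc t * mb" by simp
  also have "\<dots> \<le> ma * mb" using assms(1) by (intro mult_le_mono1) simp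
  finally show ?thesis using assms by simp
qed

definition syn :: "(nat \<Rightarrow> 'a) \<Rightarrow> nat \<Rightarrow> 'a" where
  "syn v = (\<lambda>r. if r < ma*mb then S v (r div mb) (r mod mb) else 0)"

lemma syn_vecs: "syn v \<in> vecs (ma*mb)" by (simp add: syn_def vecs_def)

lemma syn_eq_iff: "syn v = syn v' \<longleftrightarrow> S v = S v'"
proof
  assume h: "syn v = syn v'"
  show "S v = S v'"
  proof (intro ext)
    fix t t' show "S v t t' = S v' t t'"
    proof (cases "t < ma \<and> t' < mb")
      case True
      note i = idx_mm[OF conjunct1[OF True] conjunct2[OF True]]
      show ?thesis using fun_cong[OF h, of "t*mb+t'"] i by (simp add: syn_def)
    next
      case False then show ?thesis by (auto simp: S_out1 S_out2 not_less)
    qed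
  qed
next
  assume h: "S v = S v'"
  show "syn v = syn v'" unfolding syn_def h ..
qed

lemma syn_surj:
  assumes y: "y \<in> vecs (ma*mb)"
  shows "\<exists>w\<in>vecs N. syn w = y"
proof -
  define T where "T = (\<lambda>t t'. if t < ma \<and> t' < mb then y (t*mb+t') else 0)"
  have "mat_ok T" by (auto simp: T_def mat_ok_def)
  then obtain w where w: "w \<in> vecs N" "S w = T" using cover by blast
  have "syn w = y"
  proof
    fix r show "syn w r = y r"
    proof (cases "r < ma*mb")
      case True
      then have mb: "0 < mb" by (cases mb) auto
      have "r div mb < ma" using True by (simp add: less_mult_imp_div_less)
      moreover have "r mod mb < mb" using mb by simp
      ultimately show ?thesis using True by (simp add: syn_def w(2) T_def)
    next
      case False then show ?thesis using y by (simp add: syn_def vecs_def)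
    qed
  qed
  then show ?thesis using w(1) by blast
qed

lemma card_C: "card Cd * card (UNIV::'a set) ^ (ma*mb) = card (UNIV::'a set) ^ N"
proof -
  define fib where "fib y = {v \<in> vecs N. syn v = y}" for y
  have U: "vecs N = \<Union>(fib ` vecs (ma*mb))" using syn_vecs by (auto simp: fib_def)
  have fc: "card (fib y) = card Cd" if y: "y \<in> vecs (ma*mb)" for y
  proof -
    obtain w where w: "w \<in> vecs N" "syn w = y" using syn_surj[OF y] by blast
    have "fib y = (\<lambda>c. w + c) ` Cd"
    proof
      show "fib y \<subseteq> (\<lambda>c. w + c) ` Cd"
      proof
        fix v assume "v \<in> fib y"
        then have v: "v \<in> vecs N" "syn v = y" by (auto simp: fib_def)
        have "v - w \<in> Cd" using C_diffI[OF v(1) w(1)] v(2) w(2) syn_eq_iff by metis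
        moreover have "v = w + (v - w)" by simp
        ultimately show "v \<in> (\<lambda>c. w + c) ` Cd" by blast
      qed
    next
      show "(\<lambda>c. w + c) ` Cd \<subseteq> fib y"
      proof
        fix z assume "z \<in> (\<lambda>c. w + c) ` Cd"
        then obtain c where c: "c \<in> Cd" "z = w + c" by blast
        have "S c = 0" using c(1) by (simp add: C_eq)
        then have "S z = S w" by (simp add: c(2) S_add)
        then have "syn z = y" using w(2) syn_eq_iff by metis
        moreover have "z \<in> vecs N" using c C_sub w(1) by blast
        ultimately show "z \<in> fib y" by (simp add: fib_def)
      qed
    qed
    moreover have "inj_on (\<lambda>c. w + c) Cd" by (rule inj_onI) simp
    ultimately show ?thesis by (simp add: card_image)
  qed
  have "card (vecs N :: (nat \<Rightarrow> 'a) set) = (\<Sum>y\<in>vecs (ma*mb). card (fib y))"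
    unfolding U by (rule card_UN_disjoint) (auto simp: fib_def)
  also have "\<dots> = (\<Sum>y\<in>(vecs (ma*mb) :: (nat \<Rightarrow> 'a) set). card Cd)" by (intro sum.cong refl fc)
  also have "\<dots> = card Cd * card (UNIV::'a set) ^ (ma*mb)" by (simp add: card_vecs)
  finally show ?thesis by (simp add: card_vecs)
qed

lemma dimC: "sv.dim Cd = N - ma*mb"
proof -
  obtain Bs where Bs: "Bs \<subseteq> Cd" "sv.independent Bs" "Cd \<subseteq> sv.span Bs" "card Bs = sv.dim Cd"
    using sv.basis_exists by blast
  have fB: "finite Bs" using Bs(1) C_finite finite_subset by blast
  have "sv.span Bs \<subseteq> Cd" using Bs(1) C_subspace by (rule sv.span_minimal)
  then have "sv.span Bs = Cd" using Bs(3) by blast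
  then have cC: "card Cd = card (UNIV::'a set) ^ sv.dim Cd" using card_span[OF fB Bs(2)] Bs(4) by simp
  have q: "1 < card (UNIV::'a set)" using card_field_ge2[where 'a='a] by linarith
  have "card (UNIV::'a set) ^ (sv.dim Cd + ma*mb) = card (UNIV::'a set) ^ N"
    using card_C cC by (simp add: power_add)
  then have "sv.dim Cd + ma*mb = N" using q by simp
  then show ?thesis by simp
qed

end

definition good :: "nat \<Rightarrow> (nat \<Rightarrow> 'a::field) set \<Rightarrow> ((nat \<Rightarrow> 'a) \<Rightarrow> (nat \<Rightarrow> 'a)) \<Rightarrow> bool" where
  "good n C \<phi> \<longleftrightarrow> (\<forall>x\<in>vecs n. \<phi> x \<in> vecs n) \<and> (\<forall>x\<in>vecs n. \<forall>y\<in>vecs n. \<phi> (x - y) = \<phi> x - \<phi> y)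
     \<and> (\<forall>x\<in>vecs n. wt (\<phi> x) = wt x) \<and> (\<forall>c\<in>C. \<phi> c \<in> C)"

lemma wt_vecs: "x \<in> vecs n \<Longrightarrow> wt x = card {i. i < n \<and> x i \<noteq> 0}"
  unfolding wt_def by (rule arg_cong[where f=card]) (auto simp: vecs_def not_less[symmetric])

lemma vecmat_good:
  fixes M :: "nat \<Rightarrow> nat \<Rightarrow> 'a::field"
  assumes M: "monomial_mat n M" and C: "\<forall>c\<in>C. vecmat n M c \<in> C"
  shows "good n C (vecmat n M)"
proof -
  define p where "p j = (THE i. i < n \<and> M i j \<noteq> 0)" for j
  have col: "\<And>j. j < n \<Longrightarrow> \<exists>!i. i < n \<and> M i j \<noteq> 0" and row: "\<And>i. i < n \<Longrightarrow> \<exists>!j. j < n \<and> M i j \<noteq> 0"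
    using M unfolding monomial_mat_def by auto
  have pj: "p j < n \<and> M (p j) j \<noteq> 0" if "j < n" for j
    unfolding p_def by (rule theI'[OF col[OF that]])
  have pu: "i = p j" if "j < n" "i < n" "M i j \<noteq> 0" for i j
    unfolding p_def by (rule the1_equality[OF col[OF that(1)], symmetric]) (use that in simp)
  have ru: "j = j'" if "i < n" "j < n" "j' < n" "M i j \<noteq> 0" "M i j' \<noteq> 0" for i j j'
    using row[OF that(1)] that(2-5) by blast
  have vm: "vecmat n M x j = x (p j) * M (p j) j" if "j < n" for x j
  proof -
    have "(\<Sum>i<n. x i * M i j) = (\<Sum>i<n. if i = p j then x i * M i j else 0)"
      by (rule sum.cong) (use pu that in auto)
    also have "\<dots> = x (p j) * M (p j) j" using pj[OF that] by (simp add: sum.delta)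
    finally show ?thesis using that by (simp add: vecmat_def)
  qed
  have pinj: "inj_on p {..<n}"
  proof (rule inj_onI)
    fix j j' assume "j \<in> {..<n}" "j' \<in> {..<n}" "p j = p j'"
    then show "j = j'" using ru[of "p j" j j'] pj[of j] pj[of j'] by auto
  qed
  have pim: "p ` {..<n} = {..<n}"
    by (rule endo_inj_surj) (use pj pinj in auto)
  have "\<forall>x\<in>vecs n. wt (vecmat n M x) = wt x"
  proof
    fix x :: "nat \<Rightarrow> 'a" assume x: "x \<in> vecs n"
    have vv: "vecmat n M x \<in> vecs n" by (simp add: vecmat_def vecs_def)
    have eq1: "{j. j < n \<and> vecmat n M x j \<noteq> 0} = {j. j < n \<and> x (p j) \<noteq> 0}"
    proof (rule Collect_cong)
      fix j show "(j < n \<and> vecmat n M x j \<noteq> 0) = (j < n \<and> x (p j) \<noteq> 0)"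
      proof (cases "j < n")
        case True then show ?thesis using pj[OF True] vm[OF True, of x] by simp
      qed simp
    qed
    have eq2: "p ` {j. j < n \<and> x (p j) \<noteq> 0} = {i. i < n \<and> x i \<noteq> 0}"
    proof -
      have "p ` {j. j < n \<and> x (p j) \<noteq> 0} = {i \<in> p ` {..<n}. x i \<noteq> 0}" by auto
      then show ?thesis using pim by auto
    qed
    have inj: "inj_on p {j. j < n \<and> x (p j) \<noteq> 0}" by (rule inj_on_subset[OF pinj]) auto
    have "card {i. i < n \<and> x i \<noteq> 0} = card (p ` {j. j < n \<and> x (p j) \<noteq> 0})" using eq2 by simp
    also have "\<dots> = card {j. j < n \<and> x (p j) \<noteq> 0}" by (rule card_image[OF inj])
    also have "\<dots> = card {j. j < n \<and> vecmat n M x j \<noteq> 0}" using eq1 by simp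
    finally have "card {j. j < n \<and> vecmat n M x j \<noteq> 0} = card {i. i < n \<and> x i \<noteq> 0}" by simp
    then show "wt (vecmat n M x) = wt x" using wt_vecs[OF x] wt_vecs[OF vv] by simp
  qed
  moreover have "\<forall>x\<in>vecs n. \<forall>y\<in>vecs n. vecmat n M (x - y) = vecmat n M x - vecmat n M y"
    by (simp add: vecmat_def fun_eq_iff sum_subtractf left_diff_distrib)
  moreover have "\<forall>x\<in>vecs n. vecmat n M x \<in> vecs n" by (simp add: vecmat_def vecs_def)
  ultimately show ?thesis using C by (simp add: good_def)
qed

lemma fieldaut_good:
  fixes \<sigma> :: "'a::field \<Rightarrow> 'a"
  assumes \<sigma>: "field_aut \<sigma>" and C: "\<forall>c\<in>C. (\<lambda>i. \<sigma> (c i)) \<in> C"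
  shows "good n C (\<lambda>v i. \<sigma> (v i))"
proof -
  have add: "\<And>x y. \<sigma> (x + y) = \<sigma> x + \<sigma> y" and bj: "bij \<sigma>" using \<sigma> by (auto simp: field_aut_def)
  have z: "\<sigma> 0 = 0" using add[of 0 0] by (metis add_cancel_right_right add_0)
  have d: "\<sigma> (x - y) = \<sigma> x - \<sigma> y" for x y using add[of "x - y" y] by (simp add: algebra_simps)
  have nz: "\<sigma> x = 0 \<longleftrightarrow> x = 0" for x using bj z by (metis bij_pointE)
  show ?thesis unfolding good_def
    using C by (auto simp: vecs_def z d nz wt_def fun_eq_iff)
qed

lemma comp_good: "good n C \<phi> \<Longrightarrow> good n C \<psi> \<Longrightarrow> good n C (\<phi> \<circ> \<psi>)"
  unfolding good_def by auto

lemma aut_good: "\<phi> \<in> aut_group n C \<Longrightarrow> good n C \<phi>"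
proof (induct rule: aut_group.induct)
  case (mono M) then show ?case by (rule vecmat_good)
next
  case (fieldaut \<sigma>) then show ?case by (rule fieldaut_good)
next
  case (comp \<phi> \<psi>) then show ?case by (intro comp_good)
qed

lemma good_zero: "good n C \<phi> \<Longrightarrow> \<phi> 0 = 0"
  unfolding good_def by (metis diff_self vecs_zero)

lemma good_inj: "good n C \<phi> \<Longrightarrow> inj_on \<phi> (vecs n)"
proof (rule inj_onI)
  fix x y assume g: "good n C \<phi>" and x: "x \<in> vecs n" and y: "y \<in> vecs n" and e: "\<phi> x = \<phi> y"
  have "\<phi> (x - y) = \<phi> x - \<phi> y" using g x y unfolding good_def by blast
  then have "\<phi> (x - y) = 0" using e by simp
  then have "wt (\<phi> (x - y)) = 0" by simp
  then have "wt (x - y) = 0" using g vecs_diff[OF x y] unfolding good_def by metis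
  then have "x - y = 0" using wt_eq_0[OF vecs_diff[OF x y]] by blast
  then show "x = y" by simp
qed

lemma good_C: "good n C \<phi> \<Longrightarrow> C \<subseteq> vecs n \<Longrightarrow> finite C \<Longrightarrow> \<phi> ` C = C"
  by (rule endo_inj_surj) (auto simp: good_def intro: inj_on_subset[OF good_inj])

lemma good_surj: "good n C (\<phi> :: (nat \<Rightarrow> 'a::{field,finite}) \<Rightarrow> _) \<Longrightarrow> \<phi> ` vecs n = vecs n"
  by (rule endo_inj_surj) (auto simp: good_def intro: good_inj)

context kr begin

lemma good_dist:
  assumes g: "good N Cd \<phi>" and v: "v \<in> vecs N"
  shows "dc (\<phi> v) = dc v"
proof -
  have "hdist (\<phi> v) ` Cd = hdist (\<phi> v) ` (\<phi> ` Cd)" using good_C[OF g C_sub C_finite] by simp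
  also have "\<dots> = (\<lambda>c. hdist v c) ` Cd"
    unfolding image_image
  proof (rule image_cong[OF refl])
    fix c assume "c \<in> Cd"
    then have c: "c \<in> vecs N" using C_sub by blast
    have "hdist (\<phi> v) (\<phi> c) = wt (\<phi> (v - c))" using g v c unfolding good_def hdist_def by metis
    also have "\<dots> = hdist v c" using g vecs_diff[OF v c] unfolding good_def hdist_def by metis
    finally show "hdist (\<phi> v) (\<phi> c) = hdist v c" .
  qed
  finally show ?thesis by (simp add: dc_def dist_to_code_def)
qed

end

definition indep_fam :: "('b \<Rightarrow> nat \<Rightarrow> 'a::field) \<Rightarrow> 'b set \<Rightarrow> bool" where
  "indep_fam x P \<longleftrightarrow> (\<forall>c. (\<Sum>p\<in>P. scalev (c p) (x p)) = 0 \<longrightarrow> (\<forall>p\<in>P. c p = 0))"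

lemma indep_inj:
  fixes x :: "'b \<Rightarrow> nat \<Rightarrow> 'a::field"
  assumes fP: "finite P" and ind: "indep_fam x P"
  shows "inj_on x P"
proof (rule inj_onI, rule ccontr)
  fix p q assume p: "p \<in> P" and q: "q \<in> P" and e: "x p = x q" and pq: "p \<noteq> q"
  define c where "c r = (if r = p then 1 else if r = q then -1 else (0::'a))" for r
  have "(\<Sum>r\<in>P. scalev (c r) (x r)) = (\<Sum>r\<in>{p,q}. scalev (c r) (x r))"
    using p q fP by (intro sum.mono_neutral_right) (auto simp: c_def scalev_def fun_eq_iff)
  also have "\<dots> = 0" using pq e by (simp add: c_def scalev_def fun_eq_iff)
  finally have "c p = 0" using ind p unfolding indep_fam_def by blast
  then show False by (simp add: c_def)
qed

lemma indep_independent: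
  fixes x :: "'b \<Rightarrow> nat \<Rightarrow> 'a::field"
  assumes fP: "finite P" and ind: "indep_fam x P"
  shows "sv.independent (x ` P)"
proof (rule sv.independent_if_scalars_zero)
  show "finite (x ` P)" using fP by simp
next
  fix f :: "(nat \<Rightarrow> 'a) \<Rightarrow> 'a" and y assume s: "(\<Sum>y\<in>x ` P. scalev (f y) y) = 0" and y: "y \<in> x ` P"
  have h: "(\<Sum>p\<in>P. scalev (f (x p)) (x p)) = 0"
    using s by (simp add: sum.reindex[OF indep_inj[OF fP ind]])
  have "(\<Sum>p\<in>P. scalev ((\<lambda>p. f (x p)) p) (x p)) = 0 \<longrightarrow> (\<forall>p\<in>P. (\<lambda>p. f (x p)) p = 0)"
    using ind unfolding indep_fam_def by (rule spec)
  then have "\<forall>p\<in>P. f (x p) = 0" using h by simp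
  then show "f y = 0" using y by blast
qed

lemma indep_reindex:
  fixes x' :: "'c \<Rightarrow> nat \<Rightarrow> 'a::field" and \<beta> :: "'b \<Rightarrow> 'c"
  assumes bij: "bij_betw \<beta> P P'" and ind: "indep_fam x' P'" and d: "\<And>p. p \<in> P \<Longrightarrow> d p \<noteq> 0"
  shows "indep_fam (\<lambda>p. scalev (d p) (x' (\<beta> p))) P"
  unfolding indep_fam_def
proof (intro allI impI ballI)
  fix c :: "'b \<Rightarrow> 'a" and p assume s: "(\<Sum>p\<in>P. scalev (c p) (scalev (d p) (x' (\<beta> p)))) = 0" and p: "p \<in> P"
  define ib where "ib = inv_into P \<beta>"
  define c' where "c' p' = c (ib p') * d (ib p')" for p'
  have ibb: "\<And>q. q \<in> P \<Longrightarrow> ib (\<beta> q) = q" unfolding ib_def using bij by (simp add: bij_betw_def)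
  have "(\<Sum>p'\<in>P'. scalev (c' p') (x' p')) = (\<Sum>q\<in>P. scalev (c' (\<beta> q)) (x' (\<beta> q)))"
    by (rule sum.reindex_bij_betw[OF bij, symmetric])
  also have "\<dots> = (\<Sum>q\<in>P. scalev (c q) (scalev (d q) (x' (\<beta> q))))"
    by (rule sum.cong) (auto simp: c'_def ibb scalev_def fun_eq_iff)
  finally have "(\<Sum>p'\<in>P'. scalev (c' p') (x' p')) = 0" using s by simp
  then have "c' (\<beta> p) = 0" using ind p bij unfolding indep_fam_def bij_betw_def by blast
  then show "c p = 0" using d[OF p] by (simp add: c'_def ibb[OF p])
qed

lemma ext_iso:
  fixes x x' :: "'b \<Rightarrow> nat \<Rightarrow> 'a::{field,finite}"
  assumes fP: "finite P" and ix: "indep_fam x P" and ix': "indep_fam x' P"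
    and vx: "\<And>p. p \<in> P \<Longrightarrow> x p \<in> vecs m" and vx': "\<And>p. p \<in> P \<Longrightarrow> x' p \<in> vecs m"
  shows "\<exists>g. Vector_Spaces.linear scalev scalev g \<and> g ` vecs m = vecs m \<and> inj_on g (vecs m)
     \<and> (\<forall>p\<in>P. g (x p) = x' p)"
proof -
  define X where "X = x ` P"
  define X' where "X' = x' ` P"
  have iX: "sv.independent X" unfolding X_def by (rule indep_independent[OF fP ix])
  have iX': "sv.independent X'" unfolding X'_def by (rule indep_independent[OF fP ix'])
  have sX: "X \<subseteq> vecs m" using vx by (auto simp: X_def)
  have sX': "X' \<subseteq> vecs m" using vx' by (auto simp: X'_def)
  obtain Bs where B: "X \<subseteq> Bs" "Bs \<subseteq> vecs m" "sv.independent Bs" "vecs m \<subseteq> sv.span Bs"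
    using sv.maximal_independent_subset_extend[OF sX iX] by blast
  obtain Bs' where B': "X' \<subseteq> Bs'" "Bs' \<subseteq> vecs m" "sv.independent Bs'" "vecs m \<subseteq> sv.span Bs'"
    using sv.maximal_independent_subset_extend[OF sX' iX'] by blast
  have fB: "finite Bs" using B(2) finite_subset finite_vecs by blast
  have fB': "finite Bs'" using B'(2) finite_subset finite_vecs by blast
  have cBB: "card Bs = card Bs'"
    using sv.basis_card_eq_dim[OF B(2) B(4) B(3)] sv.basis_card_eq_dim[OF B'(2) B'(4) B'(3)] by simp
  have cX: "card X = card P" unfolding X_def by (rule card_image[OF indep_inj[OF fP ix]])
  have cX': "card X' = card P" unfolding X'_def by (rule card_image[OF indep_inj[OF fP ix']])
  have "card (Bs - X) = card (Bs' - X')"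
    using card_Diff_subset[OF finite_subset[OF B(1) fB] B(1)] card_Diff_subset[OF finite_subset[OF B'(1) fB'] B'(1)]
      cBB cX cX' by simp
  then obtain h0 where h0: "bij_betw h0 (Bs - X) (Bs' - X')"
    using finite_same_card_bij[of "Bs - X" "Bs' - X'"] fB fB' by auto
  define f where "f b = (if b \<in> X then x' (inv_into P x b) else h0 b)" for b
  obtain g where g: "Vector_Spaces.linear scalev scalev g" "\<forall>b\<in>Bs. g b = f b"
    using svp.linear_independent_extend[OF B(3)] by blast
  have fx: "\<And>p. p \<in> P \<Longrightarrow> f (x p) = x' p"
    using indep_inj[OF fP ix] by (simp add: f_def X_def)
  have "f ` X = X'" by (auto simp: X_def X'_def fx image_image)
  moreover have "f ` (Bs - X) = Bs' - X'" using h0 by (simp add: f_def bij_betw_def)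
  moreover have "Bs = X \<union> (Bs - X)" "Bs' = X' \<union> (Bs' - X')" using B(1) B'(1) by auto
  ultimately have fB: "f ` Bs = Bs'" by (metis image_Un)
  have gB: "g ` Bs = Bs'" using g(2) fB by (metis image_cong)
  have spB: "sv.span Bs = vecs m"
    using sv.span_minimal[OF B(2) vecs_subspace] B(4) by blast
  have spB': "sv.span Bs' = vecs m"
    using sv.span_minimal[OF B'(2) vecs_subspace] B'(4) by blast
  have im: "g ` vecs m = vecs m"
    using svp.linear_span_image[OF g(1), of Bs] gB spB spB' by simp
  have inj: "inj_on g (vecs m)" using im by (intro eq_card_imp_inj_on) simp_all
  have "\<forall>p\<in>P. g (x p) = x' p" using g(2) B(1) fx by (auto simp: X_def)
  then show ?thesis using g(1) im inj by blast
qed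

context kr begin

lemma rep_indepA:
  assumes v: "v \<in> vecs N" and w: "w \<in> vecs N" and Sw: "S w = S v" and wtw: "wt w = dc v"
  shows "indep_fam (\<lambda>i. a (i div nb)) {i. w i \<noteq> 0}"
proof (rule ccontr)
  define P where "P = {i. w i \<noteq> 0}"
  assume "\<not> indep_fam (\<lambda>i. a (i div nb)) {i. w i \<noteq> 0}"
  then obtain c p0 where c: "(\<Sum>p\<in>P. scalev (c p) (a (p div nb))) = 0" and p0: "p0 \<in> P" "c p0 \<noteq> 0"
    unfolding indep_fam_def P_def by blast
  have fP: "finite P" using supp_finite[OF w] by (simp add: P_def)
  have PN: "\<And>p. p \<in> P \<Longrightarrow> p < N" using supp_sub[OF w] by (auto simp: P_def)
  define Q where "Q = P - {p0}"
  define e where "e p = - (c p / c p0)" for p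
  have rel: "a (p0 div nb) t = (\<Sum>p\<in>Q. e p * a (p div nb) t)" for t
  proof -
    have "(\<Sum>p\<in>P. c p * a (p div nb) t) = 0" using fun_cong[OF c, of t] by (simp add: sum_fun_apply scalev_apply)
    then have eq: "c p0 * a (p0 div nb) t + (\<Sum>p\<in>Q. c p * a (p div nb) t) = 0"
      using sum.remove[OF fP p0(1), of "\<lambda>p. c p * a (p div nb) t"] by (simp add: Q_def)
    have "(\<Sum>p\<in>Q. e p * a (p div nb) t) * c p0 = (\<Sum>p\<in>Q. e p * a (p div nb) t * c p0)"
      by (rule sum_distrib_right)
    also have "\<dots> = (\<Sum>p\<in>Q. - (c p * a (p div nb) t))"
      by (rule sum.cong) (use p0(2) in \<open>simp_all add: e_def field_simps\<close>)
    also have "\<dots> = - (\<Sum>p\<in>Q. c p * a (p div nb) t)" by (rule sum_negf)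
    also have "\<dots> = a (p0 div nb) t * c p0" using eq by (simp add: algebra_simps add_eq_0_iff)
    finally show ?thesis using p0(2) by simp
  qed
  define y where "y p = scalev (w p) (b (p mod nb)) + scalev (w p0 * e p) (b (p0 mod nb))" for p
  have SQ: "S w = (\<Sum>p\<in>Q. outer (a (p div nb)) (y p))"
  proof (intro ext)
    fix t t'
    have "S w t t' = (\<Sum>p\<in>P. w p * a (p div nb) t * b (p mod nb) t')" using S_supp[OF w] by (simp add: P_def)
    also have "\<dots> = w p0 * a (p0 div nb) t * b (p0 mod nb) t' + (\<Sum>p\<in>Q. w p * a (p div nb) t * b (p mod nb) t')"
      using sum.remove[OF fP p0(1)] by (simp add: Q_def)
    also have "\<dots> = w p0 * b (p0 mod nb) t' * (\<Sum>p\<in>Q. e p * a (p div nb) t) + (\<Sum>p\<in>Q. w p * a (p div nb) t * b (p mod nb) t')"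
      by (simp add: rel[symmetric] mult_ac)
    also have "\<dots> = (\<Sum>p\<in>Q. a (p div nb) t * y p t')"
      by (simp add: y_def scalev_apply sum_distrib_left distrib_left sum.distrib mult_ac)
    also have "\<dots> = (\<Sum>p\<in>Q. outer (a (p div nb)) (y p)) t t'"
      by (simp add: sum_fun_apply outer_def)
    finally show "S w t t' = (\<Sum>p\<in>Q. outer (a (p div nb)) (y p)) t t'" .
  qed
  have "\<forall>p\<in>Q. a (p div nb) \<in> vecs ma \<and> y p \<in> vecs mb" by (auto simp: y_def)
  then obtain w' where w': "w' \<in> vecs N" "wt w' \<le> card Q" "S w' = (\<Sum>p\<in>Q. outer (a (p div nb)) (y p))"
    using SumR1[of Q "\<lambda>p. a (p div nb)" y] fP by (auto simp: Q_def)
  have "dc v \<le> wt w'" using dist_le_wt[OF v w'(1)] w'(3) SQ Sw by simp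
  moreover have "card Q = card P - 1" using p0(1) fP by (simp add: Q_def)
  moreover have "wt w = card P" by (simp add: wt_def P_def)
  moreover have "card P \<ge> 1" using p0(1) fP by (metis One_nat_def Suc_leI card_gt_0_iff empty_iff)
  ultimately show False using wtw w'(2) by linarith
qed

lemma rep_indepB:
  assumes v: "v \<in> vecs N" and w: "w \<in> vecs N" and Sw: "S w = S v" and wtw: "wt w = dc v"
  shows "indep_fam (\<lambda>i. b (i mod nb)) {i. w i \<noteq> 0}"
proof (rule ccontr)
  define P where "P = {i. w i \<noteq> 0}"
  assume "\<not> indep_fam (\<lambda>i. b (i mod nb)) {i. w i \<noteq> 0}"
  then obtain c p0 where c: "(\<Sum>p\<in>P. scalev (c p) (b (p mod nb))) = 0" and p0: "p0 \<in> P" "c p0 \<noteq> 0"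
    unfolding indep_fam_def P_def by blast
  have fP: "finite P" using supp_finite[OF w] by (simp add: P_def)
  define Q where "Q = P - {p0}"
  define e where "e p = - (c p / c p0)" for p
  have rel: "b (p0 mod nb) t = (\<Sum>p\<in>Q. e p * b (p mod nb) t)" for t
  proof -
    have "(\<Sum>p\<in>P. c p * b (p mod nb) t) = 0" using fun_cong[OF c, of t] by (simp add: sum_fun_apply scalev_apply)
    then have eq: "c p0 * b (p0 mod nb) t + (\<Sum>p\<in>Q. c p * b (p mod nb) t) = 0"
      using sum.remove[OF fP p0(1), of "\<lambda>p. c p * b (p mod nb) t"] by (simp add: Q_def)
    have "(\<Sum>p\<in>Q. e p * b (p mod nb) t) * c p0 = (\<Sum>p\<in>Q. e p * b (p mod nb) t * c p0)"
      by (rule sum_distrib_right)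
    also have "\<dots> = (\<Sum>p\<in>Q. - (c p * b (p mod nb) t))"
      by (rule sum.cong) (use p0(2) in \<open>simp_all add: e_def field_simps\<close>)
    also have "\<dots> = - (\<Sum>p\<in>Q. c p * b (p mod nb) t)" by (rule sum_negf)
    also have "\<dots> = b (p0 mod nb) t * c p0" using eq by (simp add: algebra_simps add_eq_0_iff)
    finally show ?thesis using p0(2) by simp
  qed
  define y where "y p = scalev (w p) (a (p div nb)) + scalev (w p0 * e p) (a (p0 div nb))" for p
  have SQ: "S w = (\<Sum>p\<in>Q. outer (y p) (b (p mod nb)))"
  proof (intro ext)
    fix t t'
    have "S w t t' = (\<Sum>p\<in>P. w p * a (p div nb) t * b (p mod nb) t')" using S_supp[OF w] by (simp add: P_def)
    also have "\<dots> = w p0 * a (p0 div nb) t * b (p0 mod nb) t' + (\<Sum>p\<in>Q. w p * a (p div nb) t * b (p mod nb) t')"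
      using sum.remove[OF fP p0(1)] by (simp add: Q_def)
    also have "\<dots> = w p0 * a (p0 div nb) t * (\<Sum>p\<in>Q. e p * b (p mod nb) t') + (\<Sum>p\<in>Q. w p * a (p div nb) t * b (p mod nb) t')"
      by (simp add: rel[symmetric] mult_ac)
    also have "\<dots> = (\<Sum>p\<in>Q. y p t * b (p mod nb) t')"
      by (simp add: y_def scalev_apply sum_distrib_left distrib_right distrib_left sum.distrib mult_ac add.commute)
    also have "\<dots> = (\<Sum>p\<in>Q. outer (y p) (b (p mod nb))) t t'"
      by (simp add: sum_fun_apply outer_def)
    finally show "S w t t' = (\<Sum>p\<in>Q. outer (y p) (b (p mod nb))) t t'" .
  qed
  have "\<forall>p\<in>Q. y p \<in> vecs ma \<and> b (p mod nb) \<in> vecs mb" by (auto simp: y_def)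
  then obtain w' where w': "w' \<in> vecs N" "wt w' \<le> card Q" "S w' = (\<Sum>p\<in>Q. outer (y p) (b (p mod nb)))"
    using SumR1[of Q y "\<lambda>p. b (p mod nb)"] fP by (auto simp: Q_def)
  have "dc v \<le> wt w'" using dist_le_wt[OF v w'(1)] w'(3) SQ Sw by simp
  moreover have "card Q = card P - 1" using p0(1) fP by (simp add: Q_def)
  moreover have "wt w = card P" by (simp add: wt_def P_def)
  moreover have "card P \<ge> 1" using p0(1) fP by (metis One_nat_def Suc_leI card_gt_0_iff empty_iff)
  ultimately show False using wtw w'(2) by linarith
qed

end

context kr begin

lemma permA:
  assumes g: "Vector_Spaces.linear scalev scalev g" and im: "g ` vecs ma = vecs ma" and inj: "inj_on g (vecs ma)"
  shows "\<exists>\<pi> \<alpha>. (\<forall>s<na. \<pi> s < na \<and> \<alpha> s \<noteq> 0 \<and> g (a s) = scalev (\<alpha> s) (a (\<pi> s))) \<and> inj_on \<pi> {..<na}"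
proof -
  have g0: "g 0 = 0" by (rule svp.linear_0[OF g])
  have ex: "\<forall>s. \<exists>jc. s < na \<longrightarrow> fst jc < na \<and> snd jc \<noteq> 0 \<and> g (a s) = scalev (snd jc) (a (fst jc))"
  proof
    fix s show "\<exists>jc. s < na \<longrightarrow> fst jc < na \<and> snd jc \<noteq> 0 \<and> g (a s) = scalev (snd jc) (a (fst jc))"
    proof (cases "s < na")
      case True
      have gv: "g (a s) \<in> vecs ma" using im a_vecs by blast
      have "g (a s) \<noteq> 0"
      proof
        assume "g (a s) = 0"
        then have "g (a s) = g 0" using g0 by simp
        then have "a s = 0" using inj a_vecs vecs_zero by (metis inj_onD)
        then show False using a_nz[OF True] by simp
      qed
      then obtain j c where jc: "j < na" "g (a s) = scalev c (a j)" using a_cover[OF gv] by blast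
      have "c \<noteq> 0" using jc(2) \<open>g (a s) \<noteq> 0\<close> by (auto simp: scalev_def fun_eq_iff)
      then show ?thesis using jc by (intro exI[of _ "(j, c)"]) simp
    qed simp
  qed
  then obtain F where F: "\<And>s. s < na \<Longrightarrow> fst (F s) < na \<and> snd (F s) \<noteq> 0 \<and> g (a s) = scalev (snd (F s)) (a (fst (F s)))"
    by metis
  define \<pi> where "\<pi> s = fst (F s)" for s
  define \<alpha> where "\<alpha> s = snd (F s)" for s
  have P: "\<forall>s<na. \<pi> s < na \<and> \<alpha> s \<noteq> 0 \<and> g (a s) = scalev (\<alpha> s) (a (\<pi> s))"
    using F by (simp add: \<pi>_def \<alpha>_def)
  have "inj_on \<pi> {..<na}"
  proof (rule inj_onI, rule ccontr)
    fix s s' assume s: "s \<in> {..<na}" and s': "s' \<in> {..<na}" and e: "\<pi> s = \<pi> s'" and ne: "s \<noteq> s'"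
    have Ps: "\<alpha> s \<noteq> 0" "g (a s) = scalev (\<alpha> s) (a (\<pi> s))" using P s by auto
    have Ps': "\<alpha> s' \<noteq> 0" "g (a s') = scalev (\<alpha> s') (a (\<pi> s))" using P s' e by auto
    have "g (scalev (\<alpha> s / \<alpha> s') (a s')) = scalev (\<alpha> s / \<alpha> s') (g (a s'))"
      by (rule svp.linear_scale[OF g])
    also have "\<dots> = g (a s)" using Ps Ps' by (simp add: scalev_def fun_eq_iff)
    finally have eq: "g (scalev (\<alpha> s / \<alpha> s') (a s')) = g (a s)" .
    have "scalev (\<alpha> s / \<alpha> s') (a s') = a s"
      by (rule inj_onD[OF inj eq vecs_scale[OF a_vecs] a_vecs])
    then show False using a_np s s' ne by (metis lessThan_iff)
  qed
  then show ?thesis using P by blast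
qed

lemma permB:
  assumes g: "Vector_Spaces.linear scalev scalev g" and im: "g ` vecs mb = vecs mb" and inj: "inj_on g (vecs mb)"
  shows "\<exists>\<pi> \<alpha>. (\<forall>s<nb. \<pi> s < nb \<and> \<alpha> s \<noteq> 0 \<and> g (b s) = scalev (\<alpha> s) (b (\<pi> s))) \<and> inj_on \<pi> {..<nb}"
proof -
  have g0: "g 0 = 0" by (rule svp.linear_0[OF g])
  have ex: "\<forall>s. \<exists>jc. s < nb \<longrightarrow> fst jc < nb \<and> snd jc \<noteq> 0 \<and> g (b s) = scalev (snd jc) (b (fst jc))"
  proof
    fix s show "\<exists>jc. s < nb \<longrightarrow> fst jc < nb \<and> snd jc \<noteq> 0 \<and> g (b s) = scalev (snd jc) (b (fst jc))"
    proof (cases "s < nb")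
      case True
      have gv: "g (b s) \<in> vecs mb" using im b_vecs by blast
      have "g (b s) \<noteq> 0"
      proof
        assume "g (b s) = 0"
        then have "g (b s) = g 0" using g0 by simp
        then have "b s = 0" using inj b_vecs vecs_zero by (metis inj_onD)
        then show False using b_nz[OF True] by simp
      qed
      then obtain j c where jc: "j < nb" "g (b s) = scalev c (b j)" using b_cover[OF gv] by blast
      have "c \<noteq> 0" using jc(2) \<open>g (b s) \<noteq> 0\<close> by (auto simp: scalev_def fun_eq_iff)
      then show ?thesis using jc by (intro exI[of _ "(j, c)"]) simp
    qed simp
  qed
  then obtain F where F: "\<And>s. s < nb \<Longrightarrow> fst (F s) < nb \<and> snd (F s) \<noteq> 0 \<and> g (b s) = scalev (snd (F s)) (b (fst (F s)))"
    by metis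
  define \<pi> where "\<pi> s = fst (F s)" for s
  define \<alpha> where "\<alpha> s = snd (F s)" for s
  have P: "\<forall>s<nb. \<pi> s < nb \<and> \<alpha> s \<noteq> 0 \<and> g (b s) = scalev (\<alpha> s) (b (\<pi> s))"
    using F by (simp add: \<pi>_def \<alpha>_def)
  have "inj_on \<pi> {..<nb}"
  proof (rule inj_onI, rule ccontr)
    fix s s' assume s: "s \<in> {..<nb}" and s': "s' \<in> {..<nb}" and e: "\<pi> s = \<pi> s'" and ne: "s \<noteq> s'"
    have Ps: "\<alpha> s \<noteq> 0" "g (b s) = scalev (\<alpha> s) (b (\<pi> s))" using P s by auto
    have Ps': "\<alpha> s' \<noteq> 0" "g (b s') = scalev (\<alpha> s') (b (\<pi> s))" using P s' e by auto
    have "g (scalev (\<alpha> s / \<alpha> s') (b s')) = scalev (\<alpha> s / \<alpha> s') (g (b s'))"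
      by (rule svp.linear_scale[OF g])
    also have "\<dots> = g (b s)" using Ps Ps' by (simp add: scalev_def fun_eq_iff)
    finally have eq: "g (scalev (\<alpha> s / \<alpha> s') (b s')) = g (b s)" .
    have "scalev (\<alpha> s / \<alpha> s') (b s') = b s"
      by (rule inj_onD[OF inj eq vecs_scale[OF b_vecs] b_vecs])
    then show False using b_np s s' ne by (metis lessThan_iff)
  qed
  then show ?thesis using P by blast
qed

lemma idx_N: "s < na \<Longrightarrow> s' < nb \<Longrightarrow> s*nb+s' < N \<and> (s*nb+s') div nb = s \<and> (s*nb+s') mod nb = s'"
proof -
  assume s: "s < na" and s': "s' < nb"
  have "s*nb + s' < Suc s * nb" using s' by simp
  also have "\<dots> \<le> na*nb" using s by (intro mult_le_mono1) simp
  finally show ?thesis using s' by simp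
qed

lemma Phi:
  assumes g: "Vector_Spaces.linear scalev scalev g" and h: "Vector_Spaces.linear scalev scalev h"
  shows "(\<Sum>i<N. x i * g (a (i div nb)) t * h (b (i mod nb)) t') = h (\<lambda>l. g (\<lambda>k. S x k l) t) t'"
proof -
  have c1: "(\<lambda>k. S x k l) = (\<Sum>i<N. scalev (x i * b (i mod nb) l) (a (i div nb)))" for l
    by (simp add: fun_eq_iff S_def sum_fun_apply scalev_apply mult_ac)
  have c2: "g (\<lambda>k. S x k l) t = (\<Sum>i<N. x i * b (i mod nb) l * g (a (i div nb)) t)" for l
    unfolding c1 by (simp add: svp.linear_sum[OF g] svp.linear_scale[OF g] sum_fun_apply scalev_apply)
  have c3: "(\<lambda>l. g (\<lambda>k. S x k l) t) = (\<Sum>i<N. scalev (x i * g (a (i div nb)) t) (b (i mod nb)))"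
    by (simp add: fun_eq_iff c2 sum_fun_apply scalev_apply mult_ac)
  show ?thesis
    unfolding c3 by (simp add: svp.linear_sum[OF h] svp.linear_scale[OF h] sum_fun_apply scalev_apply mult_ac)
qed

lemma Phi_zero:
  assumes g: "Vector_Spaces.linear scalev scalev g" and h: "Vector_Spaces.linear scalev scalev h"
    and x: "S x = 0"
  shows "h (\<lambda>l. g (\<lambda>k. S x k l) t) t' = 0"
proof -
  have z: "(\<lambda>k. S x k l) = 0" for l using x by (simp add: fun_eq_iff)
  have z2: "g (\<lambda>k. S x k l) t = 0" for l by (simp only: z svp.linear_0[OF g] zero_fun_apply)
  have z3: "(\<lambda>l. g (\<lambda>k. S x k l) t) = 0" by (rule ext) (simp only: z2 zero_fun_apply)
  show ?thesis by (simp only: z3 svp.linear_0[OF h] zero_fun_apply)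
qed

end

context kr begin

lemma mono_from:
  assumes \<pi>: "\<forall>s<na. \<pi> s < na" "inj_on \<pi> {..<na}" and \<pi>': "\<forall>s<nb. \<pi>' s < nb" "inj_on \<pi>' {..<nb}"
    and \<alpha>: "\<forall>s<na. \<alpha> s \<noteq> 0" and \<beta>: "\<forall>s<nb. \<beta> s \<noteq> 0"
    and M: "M = (\<lambda>i j. if i < N \<and> j = \<pi> (i div nb) * nb + \<pi>' (i mod nb) then \<alpha> (i div nb) * \<beta> (i mod nb) else 0)"
  shows "monomial_mat N M \<and> (\<forall>x t t'. S (vecmat N M x) t t' =
     (\<Sum>i<N. x i * (\<alpha> (i div nb) * a (\<pi> (i div nb)) t) * (\<beta> (i mod nb) * b (\<pi>' (i mod nb)) t')))"
proof -
  define \<tau> where "\<tau> i = \<pi> (i div nb) * nb + \<pi>' (i mod nb)" for i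
  have M': "M = (\<lambda>i j. if i < N \<and> j = \<tau> i then \<alpha> (i div nb) * \<beta> (i mod nb) else 0)"
    unfolding M \<tau>_def ..
  have \<tau>: "\<tau> i < N \<and> \<tau> i div nb = \<pi> (i div nb) \<and> \<tau> i mod nb = \<pi>' (i mod nb)" if "i < N" for i
  proof -
    have "\<pi> (i div nb) < na" "\<pi>' (i mod nb) < nb" using idx_dm[OF that] \<pi>(1) \<pi>'(1) by auto
    then show ?thesis unfolding \<tau>_def by (rule idx_N)
  qed
  have \<tau>inj: "inj_on \<tau> {..<N}"
  proof (rule inj_onI)
    fix i i' assume i: "i \<in> {..<N}" and i': "i' \<in> {..<N}" and e: "\<tau> i = \<tau> i'"
    have d: "\<pi> (i div nb) = \<pi> (i' div nb)" using \<tau>[of i] \<tau>[of i'] i i' e by auto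
    have m: "\<pi>' (i mod nb) = \<pi>' (i' mod nb)" using \<tau>[of i] \<tau>[of i'] i i' e by auto
    have d': "i div nb = i' div nb" using inj_onD[OF \<pi>(2) d] idx_dm[of i] idx_dm[of i'] i i' by auto
    have m': "i mod nb = i' mod nb" using inj_onD[OF \<pi>'(2) m] idx_dm[of i] idx_dm[of i'] i i' by auto
    have "i = i div nb * nb + i mod nb" by simp
    also have "\<dots> = i' div nb * nb + i' mod nb" using d' m' by simp
    finally show "i = i'" by simp
  qed
  have \<tau>im: "\<tau> ` {..<N} = {..<N}" by (rule endo_inj_surj) (use \<tau> \<tau>inj in auto)
  have Mnz: "M i j \<noteq> 0 \<longleftrightarrow> i < N \<and> j = \<tau> i" for i j
  proof (cases "i < N")
    case True
    then show ?thesis using idx_dm[OF True] \<alpha> \<beta> by (simp add: M')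
  qed (simp add: M')
  have mono: "monomial_mat N M"
    unfolding monomial_mat_def
  proof (intro conjI allI impI)
    fix i assume i: "i < N" show "\<exists>!j. j < N \<and> M i j \<noteq> 0"
      by (rule ex1I[of _ "\<tau> i"]) (use \<tau>[OF i] i in \<open>auto simp: Mnz\<close>)
  next
    fix j assume j: "j < N"
    then obtain i where i: "i < N" "j = \<tau> i" using \<tau>im by (metis imageE lessThan_iff)
    show "\<exists>!i. i < N \<and> M i j \<noteq> 0"
    proof (rule ex1I[of _ i])
      show "i < N \<and> M i j \<noteq> 0" using i by (simp add: Mnz)
    next
      fix i' assume "i' < N \<and> M i' j \<noteq> 0"
      then have "i' < N" "\<tau> i' = \<tau> i" using i by (auto simp: Mnz)
      then show "i' = i" using \<tau>inj i(1) by (meson inj_onD lessThan_iff)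
    qed
  qed
  have form: "S (vecmat N M x) t t' =
     (\<Sum>i<N. x i * (\<alpha> (i div nb) * a (\<pi> (i div nb)) t) * (\<beta> (i mod nb) * b (\<pi>' (i mod nb)) t'))" for x t t'
  proof -
    define F where "F j = a (j div nb) t * b (j mod nb) t'" for j
    have "S (vecmat N M x) t t' = (\<Sum>j<N. (\<Sum>i<N. x i * M i j) * F j)"
      unfolding S_def F_def by (rule sum.cong) (simp_all add: vecmat_def mult.assoc)
    also have "\<dots> = (\<Sum>j<N. \<Sum>i<N. x i * M i j * F j)" by (simp add: sum_distrib_right)
    also have "\<dots> = (\<Sum>i<N. \<Sum>j<N. x i * M i j * F j)" by (rule sum.swap)
    also have "\<dots> = (\<Sum>i<N. x i * (\<alpha> (i div nb) * \<beta> (i mod nb)) * F (\<tau> i))"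
    proof (rule sum.cong[OF refl])
      fix i assume "i \<in> {..<N}"
      then have iN: "i < N" by simp
      have "(\<Sum>j<N. x i * M i j * F j) = (\<Sum>j<N. if j = \<tau> i then x i * (\<alpha> (i div nb) * \<beta> (i mod nb)) * F j else 0)"
        by (rule sum.cong) (simp_all add: M' iN)
      also have "\<dots> = x i * (\<alpha> (i div nb) * \<beta> (i mod nb)) * F (\<tau> i)" using \<tau>[OF iN] by (simp add: sum.delta)
      finally show "(\<Sum>j<N. x i * M i j * F j) = x i * (\<alpha> (i div nb) * \<beta> (i mod nb)) * F (\<tau> i)" .
    qed
    also have "\<dots> = (\<Sum>i<N. x i * (\<alpha> (i div nb) * a (\<pi> (i div nb)) t) * (\<beta> (i mod nb) * b (\<pi>' (i mod nb)) t'))"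
      by (rule sum.cong) (simp_all add: F_def \<tau> mult_ac)
    finally show ?thesis .
  qed
  show ?thesis using mono form by blast
qed

end

context kr begin

lemma TR:
  assumes v: "v \<in> vecs N" and u: "u \<in> vecs N" and d: "dc v = dc u"
  shows "\<exists>\<phi>\<in>aut_group N Cd. \<phi> v - u \<in> Cd"
proof -
  obtain w where w: "w \<in> vecs N" "S w = S v" "wt w = dc v" using dist_rep[OF v] by blast
  obtain w' where w': "w' \<in> vecs N" "S w' = S u" "wt w' = dc u" using dist_rep[OF u] by blast
  define P where "P = {i. w i \<noteq> 0}"
  define P' where "P' = {i. w' i \<noteq> 0}"
  have fP: "finite P" using supp_finite[OF w(1)] by (simp add: P_def)
  have fP': "finite P'" using supp_finite[OF w'(1)] by (simp add: P'_def)
  have PN: "P \<subseteq> {..<N}" using supp_sub[OF w(1)] by (simp add: P_def)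
  have "card P = card P'" using w(3) w'(3) d by (simp add: wt_def P_def P'_def)
  then obtain \<beta> where \<beta>: "bij_betw \<beta> P P'" using finite_same_card_bij[OF fP fP'] by blast
  have \<beta>P: "\<And>p. p \<in> P \<Longrightarrow> \<beta> p \<in> P'" using \<beta> by (auto simp: bij_betw_def)
  have iA: "indep_fam (\<lambda>i. a (i div nb)) P" unfolding P_def by (rule rep_indepA[OF v w])
  have iA': "indep_fam (\<lambda>i. a (i div nb)) P'" unfolding P'_def by (rule rep_indepA[OF u w'])
  have iB: "indep_fam (\<lambda>i. b (i mod nb)) P" unfolding P_def by (rule rep_indepB[OF v w])
  have iB': "indep_fam (\<lambda>i. b (i mod nb)) P'" unfolding P'_def by (rule rep_indepB[OF u w'])
  define dd where "dd p = w' (\<beta> p) / w p" for p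
  have dd0: "\<And>p. p \<in> P \<Longrightarrow> dd p \<noteq> 0" using \<beta>P by (auto simp: dd_def P_def P'_def)
  have iA2: "indep_fam (\<lambda>p. scalev 1 (a (\<beta> p div nb))) P"
    using indep_reindex[OF \<beta> iA', of "\<lambda>_. 1"] by simp
  have iB2: "indep_fam (\<lambda>p. scalev (dd p) (b (\<beta> p mod nb))) P"
    using indep_reindex[OF \<beta> iB' dd0] by simp
  obtain g where g: "Vector_Spaces.linear scalev scalev g" "g ` vecs ma = vecs ma" "inj_on g (vecs ma)"
      "\<forall>p\<in>P. g (a (p div nb)) = scalev 1 (a (\<beta> p div nb))"
    using ext_iso[OF fP iA iA2] by blast
  obtain h where h: "Vector_Spaces.linear scalev scalev h" "h ` vecs mb = vecs mb" "inj_on h (vecs mb)"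
      "\<forall>p\<in>P. h (b (p mod nb)) = scalev (dd p) (b (\<beta> p mod nb))"
    using ext_iso[OF fP iB iB2] by blast
  obtain \<pi> \<alpha> where pa: "\<forall>s<na. \<pi> s < na \<and> \<alpha> s \<noteq> 0 \<and> g (a s) = scalev (\<alpha> s) (a (\<pi> s))" "inj_on \<pi> {..<na}"
    using permA[OF g(1-3)] by blast
  obtain \<pi>' \<beta>' where pb: "\<forall>s<nb. \<pi>' s < nb \<and> \<beta>' s \<noteq> 0 \<and> h (b s) = scalev (\<beta>' s) (b (\<pi>' s))" "inj_on \<pi>' {..<nb}"
    using permB[OF h(1-3)] by blast
  define M where "M = (\<lambda>i j. if i < N \<and> j = \<pi> (i div nb) * nb + \<pi>' (i mod nb) then \<alpha> (i div nb) * \<beta>' (i mod nb) else 0)"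
  have MM: "monomial_mat N M \<and> (\<forall>x t t'. S (vecmat N M x) t t' =
     (\<Sum>i<N. x i * (\<alpha> (i div nb) * a (\<pi> (i div nb)) t) * (\<beta>' (i mod nb) * b (\<pi>' (i mod nb)) t')))"
    by (rule mono_from) (use pa pb in \<open>simp_all add: M_def\<close>)
  have SPhi: "S (vecmat N M x) t t' = h (\<lambda>l. g (\<lambda>k. S x k l) t) t'" for x t t'
  proof -
    have "S (vecmat N M x) t t' = (\<Sum>i<N. x i * g (a (i div nb)) t * h (b (i mod nb)) t')"
      unfolding MM[THEN conjunct2, rule_format]
    proof (rule sum.cong[OF refl])
      fix i assume "i \<in> {..<N}"
      then have i: "i div nb < na" "i mod nb < nb" using idx_dm by auto
      show "x i * (\<alpha> (i div nb) * a (\<pi> (i div nb)) t) * (\<beta>' (i mod nb) * b (\<pi>' (i mod nb)) t') =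
          x i * g (a (i div nb)) t * h (b (i mod nb)) t'"
        using pa(1)[rule_format, OF i(1)] pb(1)[rule_format, OF i(2)] by (simp add: scalev_apply)
    qed
    also have "\<dots> = h (\<lambda>l. g (\<lambda>k. S x k l) t) t'" by (rule Phi[OF g(1) h(1)])
    finally show ?thesis .
  qed
  have vmv: "\<And>x. vecmat N M x \<in> vecs N" by (simp add: vecmat_def vecs_def)
  have aut: "vecmat N M \<in> aut_group N Cd"
  proof (rule aut_group.mono)
    show "monomial_mat N M" using MM by blast
    show "\<forall>c\<in>Cd. vecmat N M c \<in> Cd"
    proof
      fix c assume "c \<in> Cd"
      then have "S c = 0" by (simp add: C_eq)
      then have "S (vecmat N M c) = 0" using SPhi Phi_zero[OF g(1) h(1)] by (simp add: fun_eq_iff)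
      then show "vecmat N M c \<in> Cd" using vmv by (simp add: C_eq)
    qed
  qed
  have key: "S (vecmat N M v) = S u"
  proof (intro ext)
    fix t t'
    have "S (vecmat N M v) t t' = S (vecmat N M w) t t'" by (simp add: SPhi w(2))
    also have "\<dots> = (\<Sum>i<N. w i * g (a (i div nb)) t * h (b (i mod nb)) t')" by (simp add: SPhi Phi[OF g(1) h(1)])
    also have "\<dots> = (\<Sum>p\<in>P. w p * g (a (p div nb)) t * h (b (p mod nb)) t')"
      by (rule sum.mono_neutral_right) (use PN in \<open>auto simp: P_def\<close>)
    also have "\<dots> = (\<Sum>p\<in>P. w' (\<beta> p) * a (\<beta> p div nb) t * b (\<beta> p mod nb) t')"
    proof (rule sum.cong[OF refl])
      fix p assume p: "p \<in> P"
      then have "w p \<noteq> 0" by (simp add: P_def)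
      then show "w p * g (a (p div nb)) t * h (b (p mod nb)) t' = w' (\<beta> p) * a (\<beta> p div nb) t * b (\<beta> p mod nb) t'"
        using g(4) h(4) p by (simp add: scalev_apply dd_def field_simps)
    qed
    also have "\<dots> = (\<Sum>p'\<in>P'. w' p' * a (p' div nb) t * b (p' mod nb) t')"
      by (rule sum.reindex_bij_betw[OF \<beta>, where g="\<lambda>p'. w' p' * a (p' div nb) t * b (p' mod nb) t'"])
    also have "\<dots> = S w' t t'" using S_supp[OF w'(1)] by (simp add: P'_def)
    finally show "S (vecmat N M v) t t' = S u t t'" using w'(2) by simp
  qed
  have "vecmat N M v - u \<in> Cd" using C_diffI[OF vmv u key] .
  then show ?thesis using aut by blast
qed

end

context kr begin

lemma coset_eq:
  assumes "x - y \<in> Cd"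
  shows "coset Cd x = coset Cd y"
proof -
  have 1: "x + c = y + ((x - y) + c)" for c :: "nat \<Rightarrow> 'a" by simp
  have 2: "y + c = x + (c - (x - y))" for c :: "nat \<Rightarrow> 'a" by simp
  show ?thesis unfolding coset_def
  proof
    show "(+) x ` Cd \<subseteq> (+) y ` Cd" using 1 C_add[OF assms] by blast
    show "(+) y ` Cd \<subseteq> (+) x ` Cd" using 2 C_diff[OF _ assms] by blast
  qed
qed

lemma coset_eq_dc:
  assumes "coset Cd u = coset Cd u'"
  shows "dc u = dc u'"
proof -
  have "u \<in> coset Cd u" unfolding coset_def by (rule image_eqI[of _ _ 0]) simp_all
  then obtain c where c: "c \<in> Cd" "u = u' + c" using assms unfolding coset_def by blast
  then show ?thesis using dist_shift by simp
qed

definition Orb where "Orb v = {coset Cd (\<phi> v) | \<phi>. \<phi> \<in> aut_group N Cd}"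
definition Cls where "Cls r = {coset Cd u | u. u \<in> vecs N \<and> dc u = r}"

lemma Orb_eq:
  assumes v: "v \<in> vecs N"
  shows "Orb v = Cls (dc v)"
proof
  show "Orb v \<subseteq> Cls (dc v)"
  proof
    fix z assume "z \<in> Orb v"
    then obtain \<phi> where \<phi>: "\<phi> \<in> aut_group N Cd" "z = coset Cd (\<phi> v)" by (auto simp: Orb_def)
    have g: "good N Cd \<phi>" by (rule aut_good[OF \<phi>(1)])
    have "\<phi> v \<in> vecs N" using g v by (simp add: good_def)
    moreover have "dc (\<phi> v) = dc v" by (rule good_dist[OF g v])
    ultimately show "z \<in> Cls (dc v)" using \<phi>(2) by (auto simp: Cls_def)
  qed
next
  show "Cls (dc v) \<subseteq> Orb v"
  proof
    fix z assume "z \<in> Cls (dc v)"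
    then obtain u where u: "u \<in> vecs N" "dc u = dc v" "z = coset Cd u" by (auto simp: Cls_def)
    obtain \<phi> where \<phi>: "\<phi> \<in> aut_group N Cd" "\<phi> v - u \<in> Cd" using TR[OF v u(1) u(2)[symmetric]] by blast
    have "z = coset Cd (\<phi> v)" using coset_eq[OF \<phi>(2)] u(3) by simp
    then show "z \<in> Orb v" using \<phi>(1) by (auto simp: Orb_def)
  qed
qed

lemma dc_image: "dc ` vecs N = {0..min ma mb}"
proof
  show "dc ` vecs N \<subseteq> {0..min ma mb}" using cov_le by auto
  show "{0..min ma mb} \<subseteq> dc ` vecs N"
  proof
    fix r assume "r \<in> {0..min ma mb}"
    then obtain v where "v \<in> vecs N" "dc v = r" using dist_exact by auto
    then show "r \<in> dc ` vecs N" by (metis imageI)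
  qed
qed

lemma orbits_card: "card (coset_orbits N Cd) = min ma mb + 1"
proof -
  have "coset_orbits N Cd = Orb ` vecs N"
    unfolding coset_orbits_def Orb_def by simp
  also have "\<dots> = (\<lambda>v. Cls (dc v)) ` vecs N" using Orb_eq by (intro image_cong) simp_all
  also have "\<dots> = Cls ` {0..min ma mb}" by (simp add: image_image[symmetric] dc_image)
  finally have e: "coset_orbits N Cd = Cls ` {0..min ma mb}" .
  have "inj_on Cls {0..min ma mb}"
  proof (rule inj_onI)
    fix r r' assume r: "r \<in> {0..min ma mb}" and r': "r' \<in> {0..min ma mb}" and e: "Cls r = Cls r'"
    obtain v where v: "v \<in> vecs N" "dc v = r" using dist_exact r by auto
    have "coset Cd v \<in> Cls r" using v by (auto simp: Cls_def)
    then have "coset Cd v \<in> Cls r'" using e by simp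
    then obtain u where u: "u \<in> vecs N" "dc u = r'" "coset Cd v = coset Cd u" by (auto simp: Cls_def)
    show "r = r'" using coset_eq_dc[OF u(3)] u(2) v(2) by simp
  qed
  then show ?thesis unfolding e by (simp add: card_image)
qed

lemma nb_card_eq:
  assumes x0: "x0 \<in> vecs N" and x: "x \<in> vecs N" and d: "dc x0 = dc x"
  shows "card {y \<in> vecs N. hdist x0 y = 1 \<and> Q (dc y)} = card {y \<in> vecs N. hdist x y = 1 \<and> Q (dc y)}"
proof -
  obtain \<phi> where \<phi>: "\<phi> \<in> aut_group N Cd" "\<phi> x0 - x \<in> Cd" using TR[OF x0 x d] by blast
  define c0 where "c0 = \<phi> x0 - x"
  have c0: "c0 \<in> Cd" "- c0 \<in> Cd" using \<phi>(2) C_diff[OF C_zero \<phi>(2)] by (simp_all add: c0_def)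
  have c0v: "c0 \<in> vecs N" using c0(1) C_sub by blast
  have g: "good N Cd \<phi>" by (rule aut_good[OF \<phi>(1)])
  define \<psi> where "\<psi> y = \<phi> y - c0" for y
  have \<psi>v: "\<psi> y \<in> vecs N" if y: "y \<in> vecs N" for y
  proof -
    have "\<phi> y \<in> vecs N" using g y unfolding good_def by blast
    then show ?thesis unfolding \<psi>_def using c0v by (rule vecs_diff)
  qed
  have \<psi>h: "hdist x (\<psi> y) = hdist x0 y" if y: "y \<in> vecs N" for y
  proof -
    have "x - \<psi> y = \<phi> x0 - \<phi> y" by (simp add: \<psi>_def c0_def)
    also have "\<dots> = \<phi> (x0 - y)" using g x0 y unfolding good_def by metis
    finally have "wt (x - \<psi> y) = wt (\<phi> (x0 - y))" by simp
    also have "\<dots> = wt (x0 - y)" using g vecs_diff[OF x0 y] unfolding good_def by metis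
    finally show ?thesis by (simp add: hdist_def)
  qed
  have \<psi>d: "dc (\<psi> y) = dc y" if y: "y \<in> vecs N" for y
  proof -
    have "\<psi> y = \<phi> y + (- c0)" by (simp add: \<psi>_def)
    then have "dc (\<psi> y) = dc (\<phi> y)" using dist_shift[OF c0(2)] by simp
    also have "\<dots> = dc y" by (rule good_dist[OF g y])
    finally show ?thesis .
  qed
  have \<psi>inj: "inj_on \<psi> (vecs N)"
  proof (rule inj_onI)
    fix y y' assume yy: "y \<in> vecs N" "y' \<in> vecs N" "\<psi> y = \<psi> y'"
    then have "\<phi> y = \<phi> y'" by (simp add: \<psi>_def)
    then show "y = y'" using inj_onD[OF good_inj[OF g]] yy(1,2) by blast
  qed
  have \<psi>s: "\<exists>y\<in>vecs N. \<psi> y = z" if z: "z \<in> vecs N" for z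
  proof -
    have "z + c0 \<in> vecs N" using z c0v by blast
    then obtain y where "y \<in> vecs N" "\<phi> y = z + c0" using good_surj[OF g] by (metis imageE)
    then show ?thesis by (intro bexI[of _ y]) (simp_all add: \<psi>_def)
  qed
  have im: "\<psi> ` {y \<in> vecs N. hdist x0 y = 1 \<and> Q (dc y)} = {y \<in> vecs N. hdist x y = 1 \<and> Q (dc y)}"
  proof
    show "\<psi> ` {y \<in> vecs N. hdist x0 y = 1 \<and> Q (dc y)} \<subseteq> {y \<in> vecs N. hdist x y = 1 \<and> Q (dc y)}"
    proof
      fix z assume "z \<in> \<psi> ` {y \<in> vecs N. hdist x0 y = 1 \<and> Q (dc y)}"
      then obtain y where y: "y \<in> vecs N" "hdist x0 y = 1" "Q (dc y)" "z = \<psi> y" by blast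
      show "z \<in> {y \<in> vecs N. hdist x y = 1 \<and> Q (dc y)}"
        using \<psi>v[OF y(1)] \<psi>h[OF y(1)] \<psi>d[OF y(1)] y by simp
    qed
  next
    show "{y \<in> vecs N. hdist x y = 1 \<and> Q (dc y)} \<subseteq> \<psi> ` {y \<in> vecs N. hdist x0 y = 1 \<and> Q (dc y)}"
    proof
      fix z assume z: "z \<in> {y \<in> vecs N. hdist x y = 1 \<and> Q (dc y)}"
      then obtain y where y: "y \<in> vecs N" "\<psi> y = z" using \<psi>s by blast
      have "hdist x0 y = 1 \<and> Q (dc y)" using z y \<psi>h[OF y(1)] \<psi>d[OF y(1)] by auto
      then show "z \<in> \<psi> ` {y \<in> vecs N. hdist x0 y = 1 \<and> Q (dc y)}" using y by blast
    qed
  qed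
  have "inj_on \<psi> {y \<in> vecs N. hdist x0 y = 1 \<and> Q (dc y)}" by (rule inj_on_subset[OF \<psi>inj]) auto
  from card_image[OF this] show ?thesis unfolding im by simp
qed

lemma compl_regular: "completely_regular N Cd"
  unfolding completely_regular_def dc_def[symmetric]
proof
  fix l
  show "\<exists>cl bl. \<forall>x\<in>vecs N. dc x = l \<longrightarrow>
          card {y \<in> vecs N. hdist x y = 1 \<and> dc y + 1 = l} = cl \<and>
          card {y \<in> vecs N. hdist x y = 1 \<and> dc y = l + 1} = bl"
  proof (cases "\<exists>x0\<in>vecs N. dc x0 = l")
    case True
    then obtain x0 where x0: "x0 \<in> vecs N" "dc x0 = l" by blast
    show ?thesis
    proof (intro exI ballI impI conjI)
      fix x assume x: "x \<in> vecs N" "dc x = l"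
      show "card {y \<in> vecs N. hdist x y = 1 \<and> dc y + 1 = l} = card {y \<in> vecs N. hdist x0 y = 1 \<and> dc y + 1 = l}"
        using nb_card_eq[OF x0(1) x(1), of "\<lambda>k. k + 1 = l"] x0(2) x(2) by simp
      show "card {y \<in> vecs N. hdist x y = 1 \<and> dc y = l + 1} = card {y \<in> vecs N. hdist x0 y = 1 \<and> dc y = l + 1}"
        using nb_card_eq[OF x0(1) x(1), of "\<lambda>k. k = l + 1"] x0(2) x(2) by simp
    qed
  next
    case False then show ?thesis by blast
  qed
qed

end

theorem theorem1:
  fixes A B :: "nat \<Rightarrow> nat \<Rightarrow> 'a::{field,finite}"
    and ma mb na nb :: nat
  defines "q \<equiv> card (UNIV :: 'a set)"
  assumes hA: "hamming_pcm ma na A" and hB: "hamming_pcm mb nb B"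
    and na_def: "na = (q ^ ma - 1) div (q - 1)" and nb_def: "nb = (q ^ mb - 1) div (q - 1)"
    and na3: "na \<ge> 3" and nb3: "nb \<ge> 3"
  shows "let n = na * nb; C = code_of_pcm (ma * mb) n (kron mb nb A B) in
           C \<subseteq> vecs n \<and> code_dim C = n - ma * mb \<and> min_dist C = 3
         \<and> covering_radius n C = min ma mb
         \<and> completely_transitive n C \<and> completely_regular n C"
proof -
  interpret kr A B ma mb na nb by unfold_locales (fact hA hB na3 nb3)+
  show ?thesis unfolding Let_def
    using C_sub dimC mindist covering orbits_card compl_regular
    by (simp add: code_dim_def completely_transitive_def)
qed

end
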